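(* Let $\Psi\in\Delta_7$ be a unit spinor, $\omega^3(X,Y,Z):=-\big(X\cdot Y\cdot Z\cdot\Psi,\Psi\big)$, and fix $(p,q)\in\mathbb{R}^2$. Call a pair $(\mathrm{T},\mathrm{F})$ with $\mathrm{T}\in\Lambda^3(\mathbb{R}^7)$, $\mathrm{F}\in\Lambda^4(\mathbb{R}^7)$ admissible if for all $X\in\mathbb{R}^7$ $$\Big(X+\tfrac14\,(X\lrcorner\mathrm{T})+p\,(X\lrcorner\mathrm{F})+q\,(X\wedge\mathrm{F})\Big)\cdot\Psi=0 .$$ Among pairs of the form $\mathrm{T}=a\,\omega^3$, $\mathrm{F}=f\,( *\omega^3)$ with $a,f\in\mathbb{R}$, the admissible ones form the $1$-parameter family $$\mathrm{T}=\Big[\frac{(12q-16p)\,f}{3}-\frac43\Big]\,\omega^3,\qquad \mathrm{F}=f\,( *\omega^3),\qquad f\in\mathbb{R}.$$ In particular, if $4p-3q=0$, the torsion form does not depend on the flux form: $\mathrm{T}=-\tfrac43\,\omega^3$ and $\mathrm{F}=f\,( *\omega^3)$.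
   Context: $\mathbb{R}^7$ carries the Euclidean metric; $\Delta_7$ is the real $8$-dimensional spin representation with $\mathrm{Spin}(7)$-invariant inner product $(\cdot,\cdot)$; Clifford multiplication satisfies $X\cdot X=-|X|^2$ and $k$-forms act by Clifford multiplication ($e_{i_1}\wedge\cdots\wedge e_{i_k}\mapsto e_{i_1}\cdots e_{i_k}$, distinct indices, orthonormal basis). One has $\omega^3\cdot\Psi=-7\Psi$. $*$ is the Hodge star for the orientation fixed by the realization of the spin representation, for which $( *\omega^3)\cdot\Psi=-7\Psi$. *)

theory Defs
  imports "HOL-Analysis.Analysis"
begin

text \<open>Vectors of R^7 are functions nat => real (components 0..6,
  the orthonormal basis e_0..e_6).  Spinors in Delta_7 = R^8 are functions nat => real
  (components 0..7).  A k-form on R^7 is a function nat list => real, read on lists of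
  length k (its components F(e_i1,...,e_ik)).\<close>

type_synonym vec7 = "nat \<Rightarrow> real"
type_synonym spinor = "nat \<Rightarrow> real"
type_synonym form = "nat list \<Rightarrow> real"

text \<open>Realization of Delta_7: octonions O = R^8 (basis 1 = e_0, e_1..e_7 imaginary
  units), Fano triples (1,2,3),(1,4,5),(1,7,6),(2,4,6),(2,5,7),(3,4,7),(3,6,5).\<close>

definition fano :: "(nat \<times> nat \<times> nat) set" where
  "fano = (\<Union>(a,b,c)\<in>{(1,2,3),(1,4,5),(1,7,6),(2,4,6),(2,5,7),(3,4,7),(3,6,5)}.
             {(a,b,c),(b,c,a),(c,a,b)})"

text \<open>Structure constants: e_i e_j = sum_k oct_c i j k e_k.\<close>
definition oct_c :: "nat \<Rightarrow> nat \<Rightarrow> nat \<Rightarrow> real" where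
  "oct_c i j k =
     (if i = 0 then (if j = k then 1 else 0)
      else if j = 0 then (if i = k then 1 else 0)
      else if i = j then (if k = 0 then -1 else 0)
      else if (i,j,k) \<in> fano then 1
      else if (j,i,k) \<in> fano then -1 else 0)"

text \<open>Clifford multiplication by the basis vector e_i of R^7 (i < 7):
  minus left octonion multiplication by e_(i+1).  This satisfies
  e_i e_j + e_j e_i = -2 delta_ij; the sign is chosen so that, with the standard
  orientation e_0 ^ ... ^ e_6, one has (*omega^3).Psi = -7 Psi.\<close>
definition cliff :: "nat \<Rightarrow> spinor \<Rightarrow> spinor" where
  "cliff i \<psi> = (\<lambda>k. - (\<Sum>j<8. oct_c (Suc i) j k * \<psi> j))"

definition sp_inner :: "spinor \<Rightarrow> spinor \<Rightarrow> real" where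
  "sp_inner \<psi> \<phi> = (\<Sum>k<8. \<psi> k * \<phi> k)"

definition sp_zero :: "spinor \<Rightarrow> bool" where
  "sp_zero \<psi> \<longleftrightarrow> (\<forall>k<8. \<psi> k = 0)"

definition cliff_list :: "nat list \<Rightarrow> spinor \<Rightarrow> spinor" where
  "cliff_list I \<psi> = foldr cliff I \<psi>"

definition incr_lists :: "nat \<Rightarrow> nat list set" where
  "incr_lists k = {I. sorted_wrt (<) I \<and> length I = k \<and> set I \<subseteq> {..<7}}"

definition vec_act :: "vec7 \<Rightarrow> spinor \<Rightarrow> spinor" where
  "vec_act X \<psi> = (\<lambda>k. \<Sum>i<7. X i * cliff i \<psi> k)"

definition form_act :: "nat \<Rightarrow> form \<Rightarrow> spinor \<Rightarrow> spinor" where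
  "form_act k F \<psi> = (\<lambda>m. \<Sum>I\<in>incr_lists k. F I * cliff_list I \<psi> m)"

definition interior :: "vec7 \<Rightarrow> form \<Rightarrow> form" where
  "interior X F = (\<lambda>I. \<Sum>i<7. X i * F (i # I))"

definition wedge1 :: "vec7 \<Rightarrow> form \<Rightarrow> form" where
  "wedge1 X F = (\<lambda>I. \<Sum>t<length I. (-1)^t * X (I ! t) * F (take t I @ drop (Suc t) I))"

definition levi :: "nat list \<Rightarrow> real" where
  "levi xs = (if length xs = 7 \<and> distinct xs \<and> set xs = {..<7}
     then (-1) ^ card {(i,j). i < j \<and> j < length xs \<and> xs ! j < xs ! i} else 0)"

definition hodge :: "nat \<Rightarrow> form \<Rightarrow> form" where
  "hodge k \<alpha> = (\<lambda>J. \<Sum>I\<in>incr_lists k. \<alpha> I * levi (I @ J))"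

definition omega3 :: "spinor \<Rightarrow> form" where
  "omega3 \<Psi> = (\<lambda>I. - sp_inner (cliff_list I \<Psi>) \<Psi>)"

definition admissible :: "real \<Rightarrow> real \<Rightarrow> spinor \<Rightarrow> form \<Rightarrow> form \<Rightarrow> bool" where
  "admissible p q \<Psi> T F \<longleftrightarrow>
     (\<forall>X :: vec7. sp_zero (\<lambda>m. vec_act X \<Psi> m
         + 1/4 * form_act 2 (interior X T) \<Psi> m
         + p * form_act 3 (interior X F) \<Psi> m
         + q * form_act 5 (wedge1 X F) \<Psi> m))"

end

theory Submission
  imports Defs
begin


fun incl :: "nat \<Rightarrow> nat \<Rightarrow> nat list list" where
  "incl n 0 = [[]]"
| "incl n (Suc k) = concat (map (\<lambda>x. map ((#) x) (incl (Suc x) k)) [n..<7])"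

lemma incl_set: "set (incl n k) = {I. sorted_wrt (<) I \<and> length I = k \<and> (\<forall>x\<in>set I. n \<le> x \<and> x < 7)}"
proof (induction k arbitrary: n)
  case 0 then show ?case by auto
next
  case (Suc k)
  show ?case
  proof (rule set_eqI, rule iffI)
    fix I assume "I \<in> set (incl n (Suc k))"
    then show "I \<in> {I. sorted_wrt (<) I \<and> length I = Suc k \<and> (\<forall>x\<in>set I. n \<le> x \<and> x < 7)}"
      using Suc by (auto simp: Suc_le_eq) (meson le_trans less_imp_le_nat)
  next
    fix I assume "I \<in> {I. sorted_wrt (<) I \<and> length I = Suc k \<and> (\<forall>x\<in>set I. n \<le> x \<and> x < 7)}"
    then obtain x J where I: "I = x # J" and h: "sorted_wrt (<) (x#J)" "length J = k" "\<forall>y\<in>set (x#J). n \<le> y \<and> y < 7"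
      by (cases I) auto
    then have "J \<in> set (incl (Suc x) k)" using Suc by auto
    then show "I \<in> set (incl n (Suc k))" using I h by auto
  qed
qed

lemma incl_distinct: "distinct (incl n k)"
proof (induction k arbitrary: n)
  case 0 then show ?case by auto
next
  case (Suc k)
  have "\<And>x y. x \<noteq> y \<Longrightarrow> set (map ((#) x) (incl (Suc x) k)) \<inter> set (map ((#) y) (incl (Suc y) k)) = {}"
    by auto
  have e: "removeAll [] (map f xs) = map f (filter (\<lambda>x. f x \<noteq> []) xs)" for f :: "nat \<Rightarrow> nat list list" and xs
    by (induction xs) auto
  have "distinct (map (\<lambda>x. map ((#) x) (incl (Suc x) k)) (filter (\<lambda>x. map ((#) x) (incl (Suc x) k) \<noteq> []) [n..<7]))"
    unfolding distinct_map
  proof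
    show "inj_on (\<lambda>x. map ((#) x) (incl (Suc x) k)) (set (filter (\<lambda>x. map ((#) x) (incl (Suc x) k) \<noteq> []) [n..<7]))"
    proof (rule inj_onI)
      fix x y assume "x \<in> set (filter (\<lambda>x. map ((#) x) (incl (Suc x) k) \<noteq> []) [n..<7])"
        and eq: "map ((#) x) (incl (Suc x) k) = map ((#) y) (incl (Suc y) k)"
      then obtain a A where A: "incl (Suc x) k = a # A" by (auto simp: neq_Nil_conv)
      then obtain b B where B: "incl (Suc y) k = b # B" using eq by (cases "incl (Suc y) k") auto
      show "x = y" using eq A B by simp
    qed
  qed simp
  then show ?case using Suc
    by (auto simp: distinct_concat_iff distinct_map e)
qed

lemma incr_lists_incl: "incr_lists k = set (incl 0 k)"
  unfolding incr_lists_def incl_set by auto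

lemma sum_incr: "(\<Sum>I\<in>incr_lists k. g I) = sum_list (map g (incl 0 k))"
  unfolding incr_lists_incl by (simp add: sum_list_distinct_conv_sum_set incl_distinct)

lemma cliff_tab[simp]:
  "cliff (0) \<psi> (0) = \<psi> (Suc 0)"
  "cliff (0) \<psi> (Suc 0) = - \<psi> (0)"
  "cliff (0) \<psi> (2) = \<psi> (3)"
  "cliff (0) \<psi> (3) = - \<psi> (2)"
  "cliff (0) \<psi> (4) = \<psi> (5)"
  "cliff (0) \<psi> (5) = - \<psi> (4)"
  "cliff (0) \<psi> (6) = - \<psi> (7)"
  "cliff (0) \<psi> (7) = \<psi> (6)"
  "cliff (Suc 0) \<psi> (0) = \<psi> (2)"
  "cliff (Suc 0) \<psi> (Suc 0) = - \<psi> (3)"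
  "cliff (Suc 0) \<psi> (2) = - \<psi> (0)"
  "cliff (Suc 0) \<psi> (3) = \<psi> (Suc 0)"
  "cliff (Suc 0) \<psi> (4) = \<psi> (6)"
  "cliff (Suc 0) \<psi> (5) = \<psi> (7)"
  "cliff (Suc 0) \<psi> (6) = - \<psi> (4)"
  "cliff (Suc 0) \<psi> (7) = - \<psi> (5)"
  "cliff (2) \<psi> (0) = \<psi> (3)"
  "cliff (2) \<psi> (Suc 0) = \<psi> (2)"
  "cliff (2) \<psi> (2) = - \<psi> (Suc 0)"
  "cliff (2) \<psi> (3) = - \<psi> (0)"
  "cliff (2) \<psi> (4) = \<psi> (7)"
  "cliff (2) \<psi> (5) = - \<psi> (6)"
  "cliff (2) \<psi> (6) = \<psi> (5)"
  "cliff (2) \<psi> (7) = - \<psi> (4)"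
  "cliff (3) \<psi> (0) = \<psi> (4)"
  "cliff (3) \<psi> (Suc 0) = - \<psi> (5)"
  "cliff (3) \<psi> (2) = - \<psi> (6)"
  "cliff (3) \<psi> (3) = - \<psi> (7)"
  "cliff (3) \<psi> (4) = - \<psi> (0)"
  "cliff (3) \<psi> (5) = \<psi> (Suc 0)"
  "cliff (3) \<psi> (6) = \<psi> (2)"
  "cliff (3) \<psi> (7) = \<psi> (3)"
  "cliff (4) \<psi> (0) = \<psi> (5)"
  "cliff (4) \<psi> (Suc 0) = \<psi> (4)"
  "cliff (4) \<psi> (2) = - \<psi> (7)"
  "cliff (4) \<psi> (3) = \<psi> (6)"
  "cliff (4) \<psi> (4) = - \<psi> (Suc 0)"
  "cliff (4) \<psi> (5) = - \<psi> (0)"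
  "cliff (4) \<psi> (6) = - \<psi> (3)"
  "cliff (4) \<psi> (7) = \<psi> (2)"
  "cliff (5) \<psi> (0) = \<psi> (6)"
  "cliff (5) \<psi> (Suc 0) = \<psi> (7)"
  "cliff (5) \<psi> (2) = \<psi> (4)"
  "cliff (5) \<psi> (3) = - \<psi> (5)"
  "cliff (5) \<psi> (4) = - \<psi> (2)"
  "cliff (5) \<psi> (5) = \<psi> (3)"
  "cliff (5) \<psi> (6) = - \<psi> (0)"
  "cliff (5) \<psi> (7) = - \<psi> (Suc 0)"
  "cliff (6) \<psi> (0) = \<psi> (7)"
  "cliff (6) \<psi> (Suc 0) = - \<psi> (6)"
  "cliff (6) \<psi> (2) = \<psi> (5)"
  "cliff (6) \<psi> (3) = \<psi> (4)"
  "cliff (6) \<psi> (4) = - \<psi> (3)"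
  "cliff (6) \<psi> (5) = - \<psi> (2)"
  "cliff (6) \<psi> (6) = \<psi> (Suc 0)"
  "cliff (6) \<psi> (7) = - \<psi> (0)"
  by (simp_all add: cliff_def oct_c_def fano_def numeral_eq_Suc lessThan_Suc)

lemma incl2: "incl 0 2 = [[0,1],[0,2],[0,3],[0,4],[0,5],[0,6],[1,2],[1,3],[1,4],[1,5],[1,6],[2,3],[2,4],[2,5],[2,6],[3,4],[3,5],[3,6],[4,5],[4,6],[5,6]]"
  by (simp add: numeral_eq_Suc)

lemma incl3: "incl 0 3 = [[0,1,2],[0,1,3],[0,1,4],[0,1,5],[0,1,6],[0,2,3],[0,2,4],[0,2,5],[0,2,6],[0,3,4],[0,3,5],[0,3,6],[0,4,5],[0,4,6],[0,5,6],[1,2,3],[1,2,4],[1,2,5],[1,2,6],[1,3,4],[1,3,5],[1,3,6],[1,4,5],[1,4,6],[1,5,6],[2,3,4],[2,3,5],[2,3,6],[2,4,5],[2,4,6],[2,5,6],[3,4,5],[3,4,6],[3,5,6],[4,5,6]]"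
  by (simp add: numeral_eq_Suc)

lemma incl5: "incl 0 5 = [[0,1,2,3,4],[0,1,2,3,5],[0,1,2,3,6],[0,1,2,4,5],[0,1,2,4,6],[0,1,2,5,6],[0,1,3,4,5],[0,1,3,4,6],[0,1,3,5,6],[0,1,4,5,6],[0,2,3,4,5],[0,2,3,4,6],[0,2,3,5,6],[0,2,4,5,6],[0,3,4,5,6],[1,2,3,4,5],[1,2,3,4,6],[1,2,3,5,6],[1,2,4,5,6],[1,3,4,5,6],[2,3,4,5,6]]"
  by (simp add: numeral_eq_Suc)


definition pairs7 :: "(nat \<times> nat) list" where
  "pairs7 = concat (map (\<lambda>j. map (\<lambda>i. (i,j)) [0..<j]) [0..<7])"

lemma pairs7_eq: "pairs7 = [(0,1),(0,2),(1,2),(0,3),(1,3),(2,3),(0,4),(1,4),(2,4),(3,4),(0,5),(1,5),(2,5),(3,5),(4,5),(0,6),(1,6),(2,6),(3,6),(4,6),(5,6)]"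
  by (simp add: pairs7_def numeral_eq_Suc)

lemma levi_alt: "levi xs = (if length xs = 7 \<and> distinct xs \<and> (\<forall>x\<in>set xs. x < 7)
   then (-1) ^ length (filter (\<lambda>(i,j). xs ! j < xs ! i) pairs7) else 0)"
proof (cases "length xs = 7 \<and> distinct xs")
  case True
  have s: "set xs = {..<7} \<longleftrightarrow> (\<forall>x\<in>set xs. x < 7)"
  proof
    assume "\<forall>x\<in>set xs. x < 7"
    then have "set xs \<subseteq> {..<7}" by auto
    moreover have "card (set xs) = card {..<7::nat}" using True by (simp add: distinct_card)
    ultimately show "set xs = {..<7}" by (simp add: card_subset_eq)
  qed auto
  have d: "distinct pairs7" by (simp add: pairs7_eq)
  have "{(i,j). i < j \<and> j < length xs \<and> xs ! j < xs ! i} = set (filter (\<lambda>(i,j). xs ! j < xs ! i) pairs7)"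
    using True unfolding pairs7_def by (auto simp: image_iff)
  then have "card {(i,j). i < j \<and> j < length xs \<and> xs ! j < xs ! i} = length (filter (\<lambda>(i,j). xs ! j < xs ! i) pairs7)"
    using d by (metis distinct_card distinct_filter set_filter)
  then show ?thesis using True s unfolding levi_def by simp
next
  case False then show ?thesis unfolding levi_def by auto
qed


lemma sum8: "(\<Sum>k<(8::nat). g k) = g 0 + g (Suc 0) + g 2 + g 3 + g 4 + g 5 + g 6 + (g 7 :: real)"
  by (simp add: numeral_eq_Suc lessThan_Suc)
lemma sum5: "(\<Sum>k<(5::nat). g k) = g 0 + g (Suc 0) + g 2 + g 3 + (g 4 :: real)"
  by (simp add: numeral_eq_Suc lessThan_Suc)
lemma hodge_zero[simp]: "\<not> distinct J \<Longrightarrow> hodge k \<alpha> J = 0"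
  by (simp add: hodge_def levi_def)
lemma hodge_tab[simp]:
  "hodge 3 \<alpha> [0, Suc 0, 2, 3] = \<alpha> [4, 5, 6]"
  "hodge 3 \<alpha> [0, Suc 0, 2, 4] = - \<alpha> [3, 5, 6]"
  "hodge 3 \<alpha> [0, Suc 0, 2, 5] = \<alpha> [3, 4, 6]"
  "hodge 3 \<alpha> [0, Suc 0, 2, 6] = - \<alpha> [3, 4, 5]"
  "hodge 3 \<alpha> [0, Suc 0, 3, 4] = \<alpha> [2, 5, 6]"
  "hodge 3 \<alpha> [0, Suc 0, 3, 5] = - \<alpha> [2, 4, 6]"
  "hodge 3 \<alpha> [0, Suc 0, 3, 6] = \<alpha> [2, 4, 5]"
  "hodge 3 \<alpha> [0, Suc 0, 4, 5] = \<alpha> [2, 3, 6]"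
  "hodge 3 \<alpha> [0, Suc 0, 4, 6] = - \<alpha> [2, 3, 5]"
  "hodge 3 \<alpha> [0, Suc 0, 5, 6] = \<alpha> [2, 3, 4]"
  "hodge 3 \<alpha> [0, 2, 3, 4] = - \<alpha> [Suc 0, 5, 6]"
  "hodge 3 \<alpha> [0, 2, 3, 5] = \<alpha> [Suc 0, 4, 6]"
  "hodge 3 \<alpha> [0, 2, 3, 6] = - \<alpha> [Suc 0, 4, 5]"
  "hodge 3 \<alpha> [0, 2, 4, 5] = - \<alpha> [Suc 0, 3, 6]"
  "hodge 3 \<alpha> [0, 2, 4, 6] = \<alpha> [Suc 0, 3, 5]"
  "hodge 3 \<alpha> [0, 2, 5, 6] = - \<alpha> [Suc 0, 3, 4]"
  "hodge 3 \<alpha> [0, 3, 4, 5] = \<alpha> [Suc 0, 2, 6]"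
  "hodge 3 \<alpha> [0, 3, 4, 6] = - \<alpha> [Suc 0, 2, 5]"
  "hodge 3 \<alpha> [0, 3, 5, 6] = \<alpha> [Suc 0, 2, 4]"
  "hodge 3 \<alpha> [0, 4, 5, 6] = - \<alpha> [Suc 0, 2, 3]"
  "hodge 3 \<alpha> [Suc 0, 0, 2, 3] = - \<alpha> [4, 5, 6]"
  "hodge 3 \<alpha> [Suc 0, 0, 2, 4] = \<alpha> [3, 5, 6]"
  "hodge 3 \<alpha> [Suc 0, 0, 2, 5] = - \<alpha> [3, 4, 6]"
  "hodge 3 \<alpha> [Suc 0, 0, 2, 6] = \<alpha> [3, 4, 5]"
  "hodge 3 \<alpha> [Suc 0, 0, 3, 4] = - \<alpha> [2, 5, 6]"
  "hodge 3 \<alpha> [Suc 0, 0, 3, 5] = \<alpha> [2, 4, 6]"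
  "hodge 3 \<alpha> [Suc 0, 0, 3, 6] = - \<alpha> [2, 4, 5]"
  "hodge 3 \<alpha> [Suc 0, 0, 4, 5] = - \<alpha> [2, 3, 6]"
  "hodge 3 \<alpha> [Suc 0, 0, 4, 6] = \<alpha> [2, 3, 5]"
  "hodge 3 \<alpha> [Suc 0, 0, 5, 6] = - \<alpha> [2, 3, 4]"
  "hodge 3 \<alpha> [Suc 0, 2, 3, 4] = \<alpha> [0, 5, 6]"
  "hodge 3 \<alpha> [Suc 0, 2, 3, 5] = - \<alpha> [0, 4, 6]"
  "hodge 3 \<alpha> [Suc 0, 2, 3, 6] = \<alpha> [0, 4, 5]"
  "hodge 3 \<alpha> [Suc 0, 2, 4, 5] = \<alpha> [0, 3, 6]"
  "hodge 3 \<alpha> [Suc 0, 2, 4, 6] = - \<alpha> [0, 3, 5]"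
  "hodge 3 \<alpha> [Suc 0, 2, 5, 6] = \<alpha> [0, 3, 4]"
  "hodge 3 \<alpha> [Suc 0, 3, 4, 5] = - \<alpha> [0, 2, 6]"
  "hodge 3 \<alpha> [Suc 0, 3, 4, 6] = \<alpha> [0, 2, 5]"
  "hodge 3 \<alpha> [Suc 0, 3, 5, 6] = - \<alpha> [0, 2, 4]"
  "hodge 3 \<alpha> [Suc 0, 4, 5, 6] = \<alpha> [0, 2, 3]"
  "hodge 3 \<alpha> [2, 0, Suc 0, 3] = \<alpha> [4, 5, 6]"
  "hodge 3 \<alpha> [2, 0, Suc 0, 4] = - \<alpha> [3, 5, 6]"
  "hodge 3 \<alpha> [2, 0, Suc 0, 5] = \<alpha> [3, 4, 6]"
  "hodge 3 \<alpha> [2, 0, Suc 0, 6] = - \<alpha> [3, 4, 5]"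
  "hodge 3 \<alpha> [2, 0, 3, 4] = \<alpha> [Suc 0, 5, 6]"
  "hodge 3 \<alpha> [2, 0, 3, 5] = - \<alpha> [Suc 0, 4, 6]"
  "hodge 3 \<alpha> [2, 0, 3, 6] = \<alpha> [Suc 0, 4, 5]"
  "hodge 3 \<alpha> [2, 0, 4, 5] = \<alpha> [Suc 0, 3, 6]"
  "hodge 3 \<alpha> [2, 0, 4, 6] = - \<alpha> [Suc 0, 3, 5]"
  "hodge 3 \<alpha> [2, 0, 5, 6] = \<alpha> [Suc 0, 3, 4]"
  "hodge 3 \<alpha> [2, Suc 0, 3, 4] = - \<alpha> [0, 5, 6]"
  "hodge 3 \<alpha> [2, Suc 0, 3, 5] = \<alpha> [0, 4, 6]"
  "hodge 3 \<alpha> [2, Suc 0, 3, 6] = - \<alpha> [0, 4, 5]"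
  "hodge 3 \<alpha> [2, Suc 0, 4, 5] = - \<alpha> [0, 3, 6]"
  "hodge 3 \<alpha> [2, Suc 0, 4, 6] = \<alpha> [0, 3, 5]"
  "hodge 3 \<alpha> [2, Suc 0, 5, 6] = - \<alpha> [0, 3, 4]"
  "hodge 3 \<alpha> [2, 3, 4, 5] = \<alpha> [0, Suc 0, 6]"
  "hodge 3 \<alpha> [2, 3, 4, 6] = - \<alpha> [0, Suc 0, 5]"
  "hodge 3 \<alpha> [2, 3, 5, 6] = \<alpha> [0, Suc 0, 4]"
  "hodge 3 \<alpha> [2, 4, 5, 6] = - \<alpha> [0, Suc 0, 3]"
  "hodge 3 \<alpha> [3, 0, Suc 0, 2] = - \<alpha> [4, 5, 6]"
  "hodge 3 \<alpha> [3, 0, Suc 0, 4] = \<alpha> [2, 5, 6]"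
  "hodge 3 \<alpha> [3, 0, Suc 0, 5] = - \<alpha> [2, 4, 6]"
  "hodge 3 \<alpha> [3, 0, Suc 0, 6] = \<alpha> [2, 4, 5]"
  "hodge 3 \<alpha> [3, 0, 2, 4] = - \<alpha> [Suc 0, 5, 6]"
  "hodge 3 \<alpha> [3, 0, 2, 5] = \<alpha> [Suc 0, 4, 6]"
  "hodge 3 \<alpha> [3, 0, 2, 6] = - \<alpha> [Suc 0, 4, 5]"
  "hodge 3 \<alpha> [3, 0, 4, 5] = - \<alpha> [Suc 0, 2, 6]"
  "hodge 3 \<alpha> [3, 0, 4, 6] = \<alpha> [Suc 0, 2, 5]"
  "hodge 3 \<alpha> [3, 0, 5, 6] = - \<alpha> [Suc 0, 2, 4]"
  "hodge 3 \<alpha> [3, Suc 0, 2, 4] = \<alpha> [0, 5, 6]"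
  "hodge 3 \<alpha> [3, Suc 0, 2, 5] = - \<alpha> [0, 4, 6]"
  "hodge 3 \<alpha> [3, Suc 0, 2, 6] = \<alpha> [0, 4, 5]"
  "hodge 3 \<alpha> [3, Suc 0, 4, 5] = \<alpha> [0, 2, 6]"
  "hodge 3 \<alpha> [3, Suc 0, 4, 6] = - \<alpha> [0, 2, 5]"
  "hodge 3 \<alpha> [3, Suc 0, 5, 6] = \<alpha> [0, 2, 4]"
  "hodge 3 \<alpha> [3, 2, 4, 5] = - \<alpha> [0, Suc 0, 6]"
  "hodge 3 \<alpha> [3, 2, 4, 6] = \<alpha> [0, Suc 0, 5]"
  "hodge 3 \<alpha> [3, 2, 5, 6] = - \<alpha> [0, Suc 0, 4]"
  "hodge 3 \<alpha> [3, 4, 5, 6] = \<alpha> [0, Suc 0, 2]"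
  "hodge 3 \<alpha> [4, 0, Suc 0, 2] = \<alpha> [3, 5, 6]"
  "hodge 3 \<alpha> [4, 0, Suc 0, 3] = - \<alpha> [2, 5, 6]"
  "hodge 3 \<alpha> [4, 0, Suc 0, 5] = \<alpha> [2, 3, 6]"
  "hodge 3 \<alpha> [4, 0, Suc 0, 6] = - \<alpha> [2, 3, 5]"
  "hodge 3 \<alpha> [4, 0, 2, 3] = \<alpha> [Suc 0, 5, 6]"
  "hodge 3 \<alpha> [4, 0, 2, 5] = - \<alpha> [Suc 0, 3, 6]"
  "hodge 3 \<alpha> [4, 0, 2, 6] = \<alpha> [Suc 0, 3, 5]"
  "hodge 3 \<alpha> [4, 0, 3, 5] = \<alpha> [Suc 0, 2, 6]"
  "hodge 3 \<alpha> [4, 0, 3, 6] = - \<alpha> [Suc 0, 2, 5]"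
  "hodge 3 \<alpha> [4, 0, 5, 6] = \<alpha> [Suc 0, 2, 3]"
  "hodge 3 \<alpha> [4, Suc 0, 2, 3] = - \<alpha> [0, 5, 6]"
  "hodge 3 \<alpha> [4, Suc 0, 2, 5] = \<alpha> [0, 3, 6]"
  "hodge 3 \<alpha> [4, Suc 0, 2, 6] = - \<alpha> [0, 3, 5]"
  "hodge 3 \<alpha> [4, Suc 0, 3, 5] = - \<alpha> [0, 2, 6]"
  "hodge 3 \<alpha> [4, Suc 0, 3, 6] = \<alpha> [0, 2, 5]"
  "hodge 3 \<alpha> [4, Suc 0, 5, 6] = - \<alpha> [0, 2, 3]"
  "hodge 3 \<alpha> [4, 2, 3, 5] = \<alpha> [0, Suc 0, 6]"
  "hodge 3 \<alpha> [4, 2, 3, 6] = - \<alpha> [0, Suc 0, 5]"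
  "hodge 3 \<alpha> [4, 2, 5, 6] = \<alpha> [0, Suc 0, 3]"
  "hodge 3 \<alpha> [4, 3, 5, 6] = - \<alpha> [0, Suc 0, 2]"
  "hodge 3 \<alpha> [5, 0, Suc 0, 2] = - \<alpha> [3, 4, 6]"
  "hodge 3 \<alpha> [5, 0, Suc 0, 3] = \<alpha> [2, 4, 6]"
  "hodge 3 \<alpha> [5, 0, Suc 0, 4] = - \<alpha> [2, 3, 6]"
  "hodge 3 \<alpha> [5, 0, Suc 0, 6] = \<alpha> [2, 3, 4]"
  "hodge 3 \<alpha> [5, 0, 2, 3] = - \<alpha> [Suc 0, 4, 6]"
  "hodge 3 \<alpha> [5, 0, 2, 4] = \<alpha> [Suc 0, 3, 6]"
  "hodge 3 \<alpha> [5, 0, 2, 6] = - \<alpha> [Suc 0, 3, 4]"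
  "hodge 3 \<alpha> [5, 0, 3, 4] = - \<alpha> [Suc 0, 2, 6]"
  "hodge 3 \<alpha> [5, 0, 3, 6] = \<alpha> [Suc 0, 2, 4]"
  "hodge 3 \<alpha> [5, 0, 4, 6] = - \<alpha> [Suc 0, 2, 3]"
  "hodge 3 \<alpha> [5, Suc 0, 2, 3] = \<alpha> [0, 4, 6]"
  "hodge 3 \<alpha> [5, Suc 0, 2, 4] = - \<alpha> [0, 3, 6]"
  "hodge 3 \<alpha> [5, Suc 0, 2, 6] = \<alpha> [0, 3, 4]"
  "hodge 3 \<alpha> [5, Suc 0, 3, 4] = \<alpha> [0, 2, 6]"
  "hodge 3 \<alpha> [5, Suc 0, 3, 6] = - \<alpha> [0, 2, 4]"
  "hodge 3 \<alpha> [5, Suc 0, 4, 6] = \<alpha> [0, 2, 3]"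
  "hodge 3 \<alpha> [5, 2, 3, 4] = - \<alpha> [0, Suc 0, 6]"
  "hodge 3 \<alpha> [5, 2, 3, 6] = \<alpha> [0, Suc 0, 4]"
  "hodge 3 \<alpha> [5, 2, 4, 6] = - \<alpha> [0, Suc 0, 3]"
  "hodge 3 \<alpha> [5, 3, 4, 6] = \<alpha> [0, Suc 0, 2]"
  "hodge 3 \<alpha> [6, 0, Suc 0, 2] = \<alpha> [3, 4, 5]"
  "hodge 3 \<alpha> [6, 0, Suc 0, 3] = - \<alpha> [2, 4, 5]"
  "hodge 3 \<alpha> [6, 0, Suc 0, 4] = \<alpha> [2, 3, 5]"
  "hodge 3 \<alpha> [6, 0, Suc 0, 5] = - \<alpha> [2, 3, 4]"
  "hodge 3 \<alpha> [6, 0, 2, 3] = \<alpha> [Suc 0, 4, 5]"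
  "hodge 3 \<alpha> [6, 0, 2, 4] = - \<alpha> [Suc 0, 3, 5]"
  "hodge 3 \<alpha> [6, 0, 2, 5] = \<alpha> [Suc 0, 3, 4]"
  "hodge 3 \<alpha> [6, 0, 3, 4] = \<alpha> [Suc 0, 2, 5]"
  "hodge 3 \<alpha> [6, 0, 3, 5] = - \<alpha> [Suc 0, 2, 4]"
  "hodge 3 \<alpha> [6, 0, 4, 5] = \<alpha> [Suc 0, 2, 3]"
  "hodge 3 \<alpha> [6, Suc 0, 2, 3] = - \<alpha> [0, 4, 5]"
  "hodge 3 \<alpha> [6, Suc 0, 2, 4] = \<alpha> [0, 3, 5]"
  "hodge 3 \<alpha> [6, Suc 0, 2, 5] = - \<alpha> [0, 3, 4]"
  "hodge 3 \<alpha> [6, Suc 0, 3, 4] = - \<alpha> [0, 2, 5]"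
  "hodge 3 \<alpha> [6, Suc 0, 3, 5] = \<alpha> [0, 2, 4]"
  "hodge 3 \<alpha> [6, Suc 0, 4, 5] = - \<alpha> [0, 2, 3]"
  "hodge 3 \<alpha> [6, 2, 3, 4] = \<alpha> [0, Suc 0, 5]"
  "hodge 3 \<alpha> [6, 2, 3, 5] = - \<alpha> [0, Suc 0, 4]"
  "hodge 3 \<alpha> [6, 2, 4, 5] = \<alpha> [0, Suc 0, 3]"
  "hodge 3 \<alpha> [6, 3, 4, 5] = - \<alpha> [0, Suc 0, 2]"
  by (simp_all add: hodge_def sum_incr incl3 levi_alt pairs7_eq)

lemma A_0_0: "form_act 2 (\<lambda>I. omega3 \<Psi> ((0)#I)) \<Psi> (0) = 3 * sp_inner \<Psi> \<Psi> * cliff (0) \<Psi> (0)"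
  by (simp add: form_act_def sum_incr incl2 omega3_def sp_inner_def cliff_list_def sum8, algebra)
lemma B_0_0: "form_act 3 (\<lambda>I. hodge 3 (omega3 \<Psi>) ((0)#I)) \<Psi> (0) = 4 * sp_inner \<Psi> \<Psi> * cliff (0) \<Psi> (0)"
  by (simp add: form_act_def sum_incr incl3 omega3_def sp_inner_def cliff_list_def sum8, algebra)
lemma C_0_0: "form_act 5 (wedge1 (\<lambda>j. if j = (0) then 1 else 0) (hodge 3 (omega3 \<Psi>))) \<Psi> (0) = -3 * sp_inner \<Psi> \<Psi> * cliff (0) \<Psi> (0)"
  by (simp add: form_act_def sum_incr incl5 wedge1_def sum5 omega3_def sp_inner_def cliff_list_def sum8, algebra)

lemma A_0_1: "form_act 2 (\<lambda>I. omega3 \<Psi> ((0)#I)) \<Psi> (Suc 0) = 3 * sp_inner \<Psi> \<Psi> * cliff (0) \<Psi> (Suc 0)"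
  by (simp add: form_act_def sum_incr incl2 omega3_def sp_inner_def cliff_list_def sum8, algebra)
lemma B_0_1: "form_act 3 (\<lambda>I. hodge 3 (omega3 \<Psi>) ((0)#I)) \<Psi> (Suc 0) = 4 * sp_inner \<Psi> \<Psi> * cliff (0) \<Psi> (Suc 0)"
  by (simp add: form_act_def sum_incr incl3 omega3_def sp_inner_def cliff_list_def sum8, algebra)
lemma C_0_1: "form_act 5 (wedge1 (\<lambda>j. if j = (0) then 1 else 0) (hodge 3 (omega3 \<Psi>))) \<Psi> (Suc 0) = -3 * sp_inner \<Psi> \<Psi> * cliff (0) \<Psi> (Suc 0)"
  by (simp add: form_act_def sum_incr incl5 wedge1_def sum5 omega3_def sp_inner_def cliff_list_def sum8, algebra)

lemma A_0_2: "form_act 2 (\<lambda>I. omega3 \<Psi> ((0)#I)) \<Psi> (2) = 3 * sp_inner \<Psi> \<Psi> * cliff (0) \<Psi> (2)"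
  by (simp add: form_act_def sum_incr incl2 omega3_def sp_inner_def cliff_list_def sum8, algebra)
lemma B_0_2: "form_act 3 (\<lambda>I. hodge 3 (omega3 \<Psi>) ((0)#I)) \<Psi> (2) = 4 * sp_inner \<Psi> \<Psi> * cliff (0) \<Psi> (2)"
  by (simp add: form_act_def sum_incr incl3 omega3_def sp_inner_def cliff_list_def sum8, algebra)
lemma C_0_2: "form_act 5 (wedge1 (\<lambda>j. if j = (0) then 1 else 0) (hodge 3 (omega3 \<Psi>))) \<Psi> (2) = -3 * sp_inner \<Psi> \<Psi> * cliff (0) \<Psi> (2)"
  by (simp add: form_act_def sum_incr incl5 wedge1_def sum5 omega3_def sp_inner_def cliff_list_def sum8, algebra)

lemma A_0_3: "form_act 2 (\<lambda>I. omega3 \<Psi> ((0)#I)) \<Psi> (3) = 3 * sp_inner \<Psi> \<Psi> * cliff (0) \<Psi> (3)"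
  by (simp add: form_act_def sum_incr incl2 omega3_def sp_inner_def cliff_list_def sum8, algebra)
lemma B_0_3: "form_act 3 (\<lambda>I. hodge 3 (omega3 \<Psi>) ((0)#I)) \<Psi> (3) = 4 * sp_inner \<Psi> \<Psi> * cliff (0) \<Psi> (3)"
  by (simp add: form_act_def sum_incr incl3 omega3_def sp_inner_def cliff_list_def sum8, algebra)
lemma C_0_3: "form_act 5 (wedge1 (\<lambda>j. if j = (0) then 1 else 0) (hodge 3 (omega3 \<Psi>))) \<Psi> (3) = -3 * sp_inner \<Psi> \<Psi> * cliff (0) \<Psi> (3)"
  by (simp add: form_act_def sum_incr incl5 wedge1_def sum5 omega3_def sp_inner_def cliff_list_def sum8, algebra)

lemma A_0_4: "form_act 2 (\<lambda>I. omega3 \<Psi> ((0)#I)) \<Psi> (4) = 3 * sp_inner \<Psi> \<Psi> * cliff (0) \<Psi> (4)"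
  by (simp add: form_act_def sum_incr incl2 omega3_def sp_inner_def cliff_list_def sum8, algebra)
lemma B_0_4: "form_act 3 (\<lambda>I. hodge 3 (omega3 \<Psi>) ((0)#I)) \<Psi> (4) = 4 * sp_inner \<Psi> \<Psi> * cliff (0) \<Psi> (4)"
  by (simp add: form_act_def sum_incr incl3 omega3_def sp_inner_def cliff_list_def sum8, algebra)
lemma C_0_4: "form_act 5 (wedge1 (\<lambda>j. if j = (0) then 1 else 0) (hodge 3 (omega3 \<Psi>))) \<Psi> (4) = -3 * sp_inner \<Psi> \<Psi> * cliff (0) \<Psi> (4)"
  by (simp add: form_act_def sum_incr incl5 wedge1_def sum5 omega3_def sp_inner_def cliff_list_def sum8, algebra)

lemma A_0_5: "form_act 2 (\<lambda>I. omega3 \<Psi> ((0)#I)) \<Psi> (5) = 3 * sp_inner \<Psi> \<Psi> * cliff (0) \<Psi> (5)"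
  by (simp add: form_act_def sum_incr incl2 omega3_def sp_inner_def cliff_list_def sum8, algebra)
lemma B_0_5: "form_act 3 (\<lambda>I. hodge 3 (omega3 \<Psi>) ((0)#I)) \<Psi> (5) = 4 * sp_inner \<Psi> \<Psi> * cliff (0) \<Psi> (5)"
  by (simp add: form_act_def sum_incr incl3 omega3_def sp_inner_def cliff_list_def sum8, algebra)
lemma C_0_5: "form_act 5 (wedge1 (\<lambda>j. if j = (0) then 1 else 0) (hodge 3 (omega3 \<Psi>))) \<Psi> (5) = -3 * sp_inner \<Psi> \<Psi> * cliff (0) \<Psi> (5)"
  by (simp add: form_act_def sum_incr incl5 wedge1_def sum5 omega3_def sp_inner_def cliff_list_def sum8, algebra)

lemma A_0_6: "form_act 2 (\<lambda>I. omega3 \<Psi> ((0)#I)) \<Psi> (6) = 3 * sp_inner \<Psi> \<Psi> * cliff (0) \<Psi> (6)"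
  by (simp add: form_act_def sum_incr incl2 omega3_def sp_inner_def cliff_list_def sum8, algebra)
lemma B_0_6: "form_act 3 (\<lambda>I. hodge 3 (omega3 \<Psi>) ((0)#I)) \<Psi> (6) = 4 * sp_inner \<Psi> \<Psi> * cliff (0) \<Psi> (6)"
  by (simp add: form_act_def sum_incr incl3 omega3_def sp_inner_def cliff_list_def sum8, algebra)
lemma C_0_6: "form_act 5 (wedge1 (\<lambda>j. if j = (0) then 1 else 0) (hodge 3 (omega3 \<Psi>))) \<Psi> (6) = -3 * sp_inner \<Psi> \<Psi> * cliff (0) \<Psi> (6)"
  by (simp add: form_act_def sum_incr incl5 wedge1_def sum5 omega3_def sp_inner_def cliff_list_def sum8, algebra)

lemma A_0_7: "form_act 2 (\<lambda>I. omega3 \<Psi> ((0)#I)) \<Psi> (7) = 3 * sp_inner \<Psi> \<Psi> * cliff (0) \<Psi> (7)"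
  by (simp add: form_act_def sum_incr incl2 omega3_def sp_inner_def cliff_list_def sum8, algebra)
lemma B_0_7: "form_act 3 (\<lambda>I. hodge 3 (omega3 \<Psi>) ((0)#I)) \<Psi> (7) = 4 * sp_inner \<Psi> \<Psi> * cliff (0) \<Psi> (7)"
  by (simp add: form_act_def sum_incr incl3 omega3_def sp_inner_def cliff_list_def sum8, algebra)
lemma C_0_7: "form_act 5 (wedge1 (\<lambda>j. if j = (0) then 1 else 0) (hodge 3 (omega3 \<Psi>))) \<Psi> (7) = -3 * sp_inner \<Psi> \<Psi> * cliff (0) \<Psi> (7)"
  by (simp add: form_act_def sum_incr incl5 wedge1_def sum5 omega3_def sp_inner_def cliff_list_def sum8, algebra)

lemma A_1_0: "form_act 2 (\<lambda>I. omega3 \<Psi> ((Suc 0)#I)) \<Psi> (0) = 3 * sp_inner \<Psi> \<Psi> * cliff (Suc 0) \<Psi> (0)"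
  by (simp add: form_act_def sum_incr incl2 omega3_def sp_inner_def cliff_list_def sum8, algebra)
lemma B_1_0: "form_act 3 (\<lambda>I. hodge 3 (omega3 \<Psi>) ((Suc 0)#I)) \<Psi> (0) = 4 * sp_inner \<Psi> \<Psi> * cliff (Suc 0) \<Psi> (0)"
  by (simp add: form_act_def sum_incr incl3 omega3_def sp_inner_def cliff_list_def sum8, algebra)
lemma C_1_0: "form_act 5 (wedge1 (\<lambda>j. if j = (Suc 0) then 1 else 0) (hodge 3 (omega3 \<Psi>))) \<Psi> (0) = -3 * sp_inner \<Psi> \<Psi> * cliff (Suc 0) \<Psi> (0)"
  by (simp add: form_act_def sum_incr incl5 wedge1_def sum5 omega3_def sp_inner_def cliff_list_def sum8, algebra)

lemma A_1_1: "form_act 2 (\<lambda>I. omega3 \<Psi> ((Suc 0)#I)) \<Psi> (Suc 0) = 3 * sp_inner \<Psi> \<Psi> * cliff (Suc 0) \<Psi> (Suc 0)"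
  by (simp add: form_act_def sum_incr incl2 omega3_def sp_inner_def cliff_list_def sum8, algebra)
lemma B_1_1: "form_act 3 (\<lambda>I. hodge 3 (omega3 \<Psi>) ((Suc 0)#I)) \<Psi> (Suc 0) = 4 * sp_inner \<Psi> \<Psi> * cliff (Suc 0) \<Psi> (Suc 0)"
  by (simp add: form_act_def sum_incr incl3 omega3_def sp_inner_def cliff_list_def sum8, algebra)
lemma C_1_1: "form_act 5 (wedge1 (\<lambda>j. if j = (Suc 0) then 1 else 0) (hodge 3 (omega3 \<Psi>))) \<Psi> (Suc 0) = -3 * sp_inner \<Psi> \<Psi> * cliff (Suc 0) \<Psi> (Suc 0)"
  by (simp add: form_act_def sum_incr incl5 wedge1_def sum5 omega3_def sp_inner_def cliff_list_def sum8, algebra)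

lemma A_1_2: "form_act 2 (\<lambda>I. omega3 \<Psi> ((Suc 0)#I)) \<Psi> (2) = 3 * sp_inner \<Psi> \<Psi> * cliff (Suc 0) \<Psi> (2)"
  by (simp add: form_act_def sum_incr incl2 omega3_def sp_inner_def cliff_list_def sum8, algebra)
lemma B_1_2: "form_act 3 (\<lambda>I. hodge 3 (omega3 \<Psi>) ((Suc 0)#I)) \<Psi> (2) = 4 * sp_inner \<Psi> \<Psi> * cliff (Suc 0) \<Psi> (2)"
  by (simp add: form_act_def sum_incr incl3 omega3_def sp_inner_def cliff_list_def sum8, algebra)
lemma C_1_2: "form_act 5 (wedge1 (\<lambda>j. if j = (Suc 0) then 1 else 0) (hodge 3 (omega3 \<Psi>))) \<Psi> (2) = -3 * sp_inner \<Psi> \<Psi> * cliff (Suc 0) \<Psi> (2)"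
  by (simp add: form_act_def sum_incr incl5 wedge1_def sum5 omega3_def sp_inner_def cliff_list_def sum8, algebra)

lemma A_1_3: "form_act 2 (\<lambda>I. omega3 \<Psi> ((Suc 0)#I)) \<Psi> (3) = 3 * sp_inner \<Psi> \<Psi> * cliff (Suc 0) \<Psi> (3)"
  by (simp add: form_act_def sum_incr incl2 omega3_def sp_inner_def cliff_list_def sum8, algebra)
lemma B_1_3: "form_act 3 (\<lambda>I. hodge 3 (omega3 \<Psi>) ((Suc 0)#I)) \<Psi> (3) = 4 * sp_inner \<Psi> \<Psi> * cliff (Suc 0) \<Psi> (3)"
  by (simp add: form_act_def sum_incr incl3 omega3_def sp_inner_def cliff_list_def sum8, algebra)
lemma C_1_3: "form_act 5 (wedge1 (\<lambda>j. if j = (Suc 0) then 1 else 0) (hodge 3 (omega3 \<Psi>))) \<Psi> (3) = -3 * sp_inner \<Psi> \<Psi> * cliff (Suc 0) \<Psi> (3)"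
  by (simp add: form_act_def sum_incr incl5 wedge1_def sum5 omega3_def sp_inner_def cliff_list_def sum8, algebra)

lemma A_1_4: "form_act 2 (\<lambda>I. omega3 \<Psi> ((Suc 0)#I)) \<Psi> (4) = 3 * sp_inner \<Psi> \<Psi> * cliff (Suc 0) \<Psi> (4)"
  by (simp add: form_act_def sum_incr incl2 omega3_def sp_inner_def cliff_list_def sum8, algebra)
lemma B_1_4: "form_act 3 (\<lambda>I. hodge 3 (omega3 \<Psi>) ((Suc 0)#I)) \<Psi> (4) = 4 * sp_inner \<Psi> \<Psi> * cliff (Suc 0) \<Psi> (4)"
  by (simp add: form_act_def sum_incr incl3 omega3_def sp_inner_def cliff_list_def sum8, algebra)
lemma C_1_4: "form_act 5 (wedge1 (\<lambda>j. if j = (Suc 0) then 1 else 0) (hodge 3 (omega3 \<Psi>))) \<Psi> (4) = -3 * sp_inner \<Psi> \<Psi> * cliff (Suc 0) \<Psi> (4)"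
  by (simp add: form_act_def sum_incr incl5 wedge1_def sum5 omega3_def sp_inner_def cliff_list_def sum8, algebra)

lemma A_1_5: "form_act 2 (\<lambda>I. omega3 \<Psi> ((Suc 0)#I)) \<Psi> (5) = 3 * sp_inner \<Psi> \<Psi> * cliff (Suc 0) \<Psi> (5)"
  by (simp add: form_act_def sum_incr incl2 omega3_def sp_inner_def cliff_list_def sum8, algebra)
lemma B_1_5: "form_act 3 (\<lambda>I. hodge 3 (omega3 \<Psi>) ((Suc 0)#I)) \<Psi> (5) = 4 * sp_inner \<Psi> \<Psi> * cliff (Suc 0) \<Psi> (5)"
  by (simp add: form_act_def sum_incr incl3 omega3_def sp_inner_def cliff_list_def sum8, algebra)
lemma C_1_5: "form_act 5 (wedge1 (\<lambda>j. if j = (Suc 0) then 1 else 0) (hodge 3 (omega3 \<Psi>))) \<Psi> (5) = -3 * sp_inner \<Psi> \<Psi> * cliff (Suc 0) \<Psi> (5)"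
  by (simp add: form_act_def sum_incr incl5 wedge1_def sum5 omega3_def sp_inner_def cliff_list_def sum8, algebra)

lemma A_1_6: "form_act 2 (\<lambda>I. omega3 \<Psi> ((Suc 0)#I)) \<Psi> (6) = 3 * sp_inner \<Psi> \<Psi> * cliff (Suc 0) \<Psi> (6)"
  by (simp add: form_act_def sum_incr incl2 omega3_def sp_inner_def cliff_list_def sum8, algebra)
lemma B_1_6: "form_act 3 (\<lambda>I. hodge 3 (omega3 \<Psi>) ((Suc 0)#I)) \<Psi> (6) = 4 * sp_inner \<Psi> \<Psi> * cliff (Suc 0) \<Psi> (6)"
  by (simp add: form_act_def sum_incr incl3 omega3_def sp_inner_def cliff_list_def sum8, algebra)
lemma C_1_6: "form_act 5 (wedge1 (\<lambda>j. if j = (Suc 0) then 1 else 0) (hodge 3 (omega3 \<Psi>))) \<Psi> (6) = -3 * sp_inner \<Psi> \<Psi> * cliff (Suc 0) \<Psi> (6)"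
  by (simp add: form_act_def sum_incr incl5 wedge1_def sum5 omega3_def sp_inner_def cliff_list_def sum8, algebra)

lemma A_1_7: "form_act 2 (\<lambda>I. omega3 \<Psi> ((Suc 0)#I)) \<Psi> (7) = 3 * sp_inner \<Psi> \<Psi> * cliff (Suc 0) \<Psi> (7)"
  by (simp add: form_act_def sum_incr incl2 omega3_def sp_inner_def cliff_list_def sum8, algebra)
lemma B_1_7: "form_act 3 (\<lambda>I. hodge 3 (omega3 \<Psi>) ((Suc 0)#I)) \<Psi> (7) = 4 * sp_inner \<Psi> \<Psi> * cliff (Suc 0) \<Psi> (7)"
  by (simp add: form_act_def sum_incr incl3 omega3_def sp_inner_def cliff_list_def sum8, algebra)
lemma C_1_7: "form_act 5 (wedge1 (\<lambda>j. if j = (Suc 0) then 1 else 0) (hodge 3 (omega3 \<Psi>))) \<Psi> (7) = -3 * sp_inner \<Psi> \<Psi> * cliff (Suc 0) \<Psi> (7)"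
  by (simp add: form_act_def sum_incr incl5 wedge1_def sum5 omega3_def sp_inner_def cliff_list_def sum8, algebra)

lemma A_2_0: "form_act 2 (\<lambda>I. omega3 \<Psi> ((2)#I)) \<Psi> (0) = 3 * sp_inner \<Psi> \<Psi> * cliff (2) \<Psi> (0)"
  by (simp add: form_act_def sum_incr incl2 omega3_def sp_inner_def cliff_list_def sum8, algebra)
lemma B_2_0: "form_act 3 (\<lambda>I. hodge 3 (omega3 \<Psi>) ((2)#I)) \<Psi> (0) = 4 * sp_inner \<Psi> \<Psi> * cliff (2) \<Psi> (0)"
  by (simp add: form_act_def sum_incr incl3 omega3_def sp_inner_def cliff_list_def sum8, algebra)
lemma C_2_0: "form_act 5 (wedge1 (\<lambda>j. if j = (2) then 1 else 0) (hodge 3 (omega3 \<Psi>))) \<Psi> (0) = -3 * sp_inner \<Psi> \<Psi> * cliff (2) \<Psi> (0)"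
  by (simp add: form_act_def sum_incr incl5 wedge1_def sum5 omega3_def sp_inner_def cliff_list_def sum8, algebra)

lemma A_2_1: "form_act 2 (\<lambda>I. omega3 \<Psi> ((2)#I)) \<Psi> (Suc 0) = 3 * sp_inner \<Psi> \<Psi> * cliff (2) \<Psi> (Suc 0)"
  by (simp add: form_act_def sum_incr incl2 omega3_def sp_inner_def cliff_list_def sum8, algebra)
lemma B_2_1: "form_act 3 (\<lambda>I. hodge 3 (omega3 \<Psi>) ((2)#I)) \<Psi> (Suc 0) = 4 * sp_inner \<Psi> \<Psi> * cliff (2) \<Psi> (Suc 0)"
  by (simp add: form_act_def sum_incr incl3 omega3_def sp_inner_def cliff_list_def sum8, algebra)
lemma C_2_1: "form_act 5 (wedge1 (\<lambda>j. if j = (2) then 1 else 0) (hodge 3 (omega3 \<Psi>))) \<Psi> (Suc 0) = -3 * sp_inner \<Psi> \<Psi> * cliff (2) \<Psi> (Suc 0)"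
  by (simp add: form_act_def sum_incr incl5 wedge1_def sum5 omega3_def sp_inner_def cliff_list_def sum8, algebra)

lemma A_2_2: "form_act 2 (\<lambda>I. omega3 \<Psi> ((2)#I)) \<Psi> (2) = 3 * sp_inner \<Psi> \<Psi> * cliff (2) \<Psi> (2)"
  by (simp add: form_act_def sum_incr incl2 omega3_def sp_inner_def cliff_list_def sum8, algebra)
lemma B_2_2: "form_act 3 (\<lambda>I. hodge 3 (omega3 \<Psi>) ((2)#I)) \<Psi> (2) = 4 * sp_inner \<Psi> \<Psi> * cliff (2) \<Psi> (2)"
  by (simp add: form_act_def sum_incr incl3 omega3_def sp_inner_def cliff_list_def sum8, algebra)
lemma C_2_2: "form_act 5 (wedge1 (\<lambda>j. if j = (2) then 1 else 0) (hodge 3 (omega3 \<Psi>))) \<Psi> (2) = -3 * sp_inner \<Psi> \<Psi> * cliff (2) \<Psi> (2)"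
  by (simp add: form_act_def sum_incr incl5 wedge1_def sum5 omega3_def sp_inner_def cliff_list_def sum8, algebra)

lemma A_2_3: "form_act 2 (\<lambda>I. omega3 \<Psi> ((2)#I)) \<Psi> (3) = 3 * sp_inner \<Psi> \<Psi> * cliff (2) \<Psi> (3)"
  by (simp add: form_act_def sum_incr incl2 omega3_def sp_inner_def cliff_list_def sum8, algebra)
lemma B_2_3: "form_act 3 (\<lambda>I. hodge 3 (omega3 \<Psi>) ((2)#I)) \<Psi> (3) = 4 * sp_inner \<Psi> \<Psi> * cliff (2) \<Psi> (3)"
  by (simp add: form_act_def sum_incr incl3 omega3_def sp_inner_def cliff_list_def sum8, algebra)
lemma C_2_3: "form_act 5 (wedge1 (\<lambda>j. if j = (2) then 1 else 0) (hodge 3 (omega3 \<Psi>))) \<Psi> (3) = -3 * sp_inner \<Psi> \<Psi> * cliff (2) \<Psi> (3)"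
  by (simp add: form_act_def sum_incr incl5 wedge1_def sum5 omega3_def sp_inner_def cliff_list_def sum8, algebra)

lemma A_2_4: "form_act 2 (\<lambda>I. omega3 \<Psi> ((2)#I)) \<Psi> (4) = 3 * sp_inner \<Psi> \<Psi> * cliff (2) \<Psi> (4)"
  by (simp add: form_act_def sum_incr incl2 omega3_def sp_inner_def cliff_list_def sum8, algebra)
lemma B_2_4: "form_act 3 (\<lambda>I. hodge 3 (omega3 \<Psi>) ((2)#I)) \<Psi> (4) = 4 * sp_inner \<Psi> \<Psi> * cliff (2) \<Psi> (4)"
  by (simp add: form_act_def sum_incr incl3 omega3_def sp_inner_def cliff_list_def sum8, algebra)
lemma C_2_4: "form_act 5 (wedge1 (\<lambda>j. if j = (2) then 1 else 0) (hodge 3 (omega3 \<Psi>))) \<Psi> (4) = -3 * sp_inner \<Psi> \<Psi> * cliff (2) \<Psi> (4)"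
  by (simp add: form_act_def sum_incr incl5 wedge1_def sum5 omega3_def sp_inner_def cliff_list_def sum8, algebra)

lemma A_2_5: "form_act 2 (\<lambda>I. omega3 \<Psi> ((2)#I)) \<Psi> (5) = 3 * sp_inner \<Psi> \<Psi> * cliff (2) \<Psi> (5)"
  by (simp add: form_act_def sum_incr incl2 omega3_def sp_inner_def cliff_list_def sum8, algebra)
lemma B_2_5: "form_act 3 (\<lambda>I. hodge 3 (omega3 \<Psi>) ((2)#I)) \<Psi> (5) = 4 * sp_inner \<Psi> \<Psi> * cliff (2) \<Psi> (5)"
  by (simp add: form_act_def sum_incr incl3 omega3_def sp_inner_def cliff_list_def sum8, algebra)
lemma C_2_5: "form_act 5 (wedge1 (\<lambda>j. if j = (2) then 1 else 0) (hodge 3 (omega3 \<Psi>))) \<Psi> (5) = -3 * sp_inner \<Psi> \<Psi> * cliff (2) \<Psi> (5)"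
  by (simp add: form_act_def sum_incr incl5 wedge1_def sum5 omega3_def sp_inner_def cliff_list_def sum8, algebra)

lemma A_2_6: "form_act 2 (\<lambda>I. omega3 \<Psi> ((2)#I)) \<Psi> (6) = 3 * sp_inner \<Psi> \<Psi> * cliff (2) \<Psi> (6)"
  by (simp add: form_act_def sum_incr incl2 omega3_def sp_inner_def cliff_list_def sum8, algebra)
lemma B_2_6: "form_act 3 (\<lambda>I. hodge 3 (omega3 \<Psi>) ((2)#I)) \<Psi> (6) = 4 * sp_inner \<Psi> \<Psi> * cliff (2) \<Psi> (6)"
  by (simp add: form_act_def sum_incr incl3 omega3_def sp_inner_def cliff_list_def sum8, algebra)
lemma C_2_6: "form_act 5 (wedge1 (\<lambda>j. if j = (2) then 1 else 0) (hodge 3 (omega3 \<Psi>))) \<Psi> (6) = -3 * sp_inner \<Psi> \<Psi> * cliff (2) \<Psi> (6)"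
  by (simp add: form_act_def sum_incr incl5 wedge1_def sum5 omega3_def sp_inner_def cliff_list_def sum8, algebra)

lemma A_2_7: "form_act 2 (\<lambda>I. omega3 \<Psi> ((2)#I)) \<Psi> (7) = 3 * sp_inner \<Psi> \<Psi> * cliff (2) \<Psi> (7)"
  by (simp add: form_act_def sum_incr incl2 omega3_def sp_inner_def cliff_list_def sum8, algebra)
lemma B_2_7: "form_act 3 (\<lambda>I. hodge 3 (omega3 \<Psi>) ((2)#I)) \<Psi> (7) = 4 * sp_inner \<Psi> \<Psi> * cliff (2) \<Psi> (7)"
  by (simp add: form_act_def sum_incr incl3 omega3_def sp_inner_def cliff_list_def sum8, algebra)
lemma C_2_7: "form_act 5 (wedge1 (\<lambda>j. if j = (2) then 1 else 0) (hodge 3 (omega3 \<Psi>))) \<Psi> (7) = -3 * sp_inner \<Psi> \<Psi> * cliff (2) \<Psi> (7)"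
  by (simp add: form_act_def sum_incr incl5 wedge1_def sum5 omega3_def sp_inner_def cliff_list_def sum8, algebra)

lemma A_3_0: "form_act 2 (\<lambda>I. omega3 \<Psi> ((3)#I)) \<Psi> (0) = 3 * sp_inner \<Psi> \<Psi> * cliff (3) \<Psi> (0)"
  by (simp add: form_act_def sum_incr incl2 omega3_def sp_inner_def cliff_list_def sum8, algebra)
lemma B_3_0: "form_act 3 (\<lambda>I. hodge 3 (omega3 \<Psi>) ((3)#I)) \<Psi> (0) = 4 * sp_inner \<Psi> \<Psi> * cliff (3) \<Psi> (0)"
  by (simp add: form_act_def sum_incr incl3 omega3_def sp_inner_def cliff_list_def sum8, algebra)
lemma C_3_0: "form_act 5 (wedge1 (\<lambda>j. if j = (3) then 1 else 0) (hodge 3 (omega3 \<Psi>))) \<Psi> (0) = -3 * sp_inner \<Psi> \<Psi> * cliff (3) \<Psi> (0)"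
  by (simp add: form_act_def sum_incr incl5 wedge1_def sum5 omega3_def sp_inner_def cliff_list_def sum8, algebra)

lemma A_3_1: "form_act 2 (\<lambda>I. omega3 \<Psi> ((3)#I)) \<Psi> (Suc 0) = 3 * sp_inner \<Psi> \<Psi> * cliff (3) \<Psi> (Suc 0)"
  by (simp add: form_act_def sum_incr incl2 omega3_def sp_inner_def cliff_list_def sum8, algebra)
lemma B_3_1: "form_act 3 (\<lambda>I. hodge 3 (omega3 \<Psi>) ((3)#I)) \<Psi> (Suc 0) = 4 * sp_inner \<Psi> \<Psi> * cliff (3) \<Psi> (Suc 0)"
  by (simp add: form_act_def sum_incr incl3 omega3_def sp_inner_def cliff_list_def sum8, algebra)
lemma C_3_1: "form_act 5 (wedge1 (\<lambda>j. if j = (3) then 1 else 0) (hodge 3 (omega3 \<Psi>))) \<Psi> (Suc 0) = -3 * sp_inner \<Psi> \<Psi> * cliff (3) \<Psi> (Suc 0)"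
  by (simp add: form_act_def sum_incr incl5 wedge1_def sum5 omega3_def sp_inner_def cliff_list_def sum8, algebra)

lemma A_3_2: "form_act 2 (\<lambda>I. omega3 \<Psi> ((3)#I)) \<Psi> (2) = 3 * sp_inner \<Psi> \<Psi> * cliff (3) \<Psi> (2)"
  by (simp add: form_act_def sum_incr incl2 omega3_def sp_inner_def cliff_list_def sum8, algebra)
lemma B_3_2: "form_act 3 (\<lambda>I. hodge 3 (omega3 \<Psi>) ((3)#I)) \<Psi> (2) = 4 * sp_inner \<Psi> \<Psi> * cliff (3) \<Psi> (2)"
  by (simp add: form_act_def sum_incr incl3 omega3_def sp_inner_def cliff_list_def sum8, algebra)
lemma C_3_2: "form_act 5 (wedge1 (\<lambda>j. if j = (3) then 1 else 0) (hodge 3 (omega3 \<Psi>))) \<Psi> (2) = -3 * sp_inner \<Psi> \<Psi> * cliff (3) \<Psi> (2)"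
  by (simp add: form_act_def sum_incr incl5 wedge1_def sum5 omega3_def sp_inner_def cliff_list_def sum8, algebra)

lemma A_3_3: "form_act 2 (\<lambda>I. omega3 \<Psi> ((3)#I)) \<Psi> (3) = 3 * sp_inner \<Psi> \<Psi> * cliff (3) \<Psi> (3)"
  by (simp add: form_act_def sum_incr incl2 omega3_def sp_inner_def cliff_list_def sum8, algebra)
lemma B_3_3: "form_act 3 (\<lambda>I. hodge 3 (omega3 \<Psi>) ((3)#I)) \<Psi> (3) = 4 * sp_inner \<Psi> \<Psi> * cliff (3) \<Psi> (3)"
  by (simp add: form_act_def sum_incr incl3 omega3_def sp_inner_def cliff_list_def sum8, algebra)
lemma C_3_3: "form_act 5 (wedge1 (\<lambda>j. if j = (3) then 1 else 0) (hodge 3 (omega3 \<Psi>))) \<Psi> (3) = -3 * sp_inner \<Psi> \<Psi> * cliff (3) \<Psi> (3)"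
  by (simp add: form_act_def sum_incr incl5 wedge1_def sum5 omega3_def sp_inner_def cliff_list_def sum8, algebra)

lemma A_3_4: "form_act 2 (\<lambda>I. omega3 \<Psi> ((3)#I)) \<Psi> (4) = 3 * sp_inner \<Psi> \<Psi> * cliff (3) \<Psi> (4)"
  by (simp add: form_act_def sum_incr incl2 omega3_def sp_inner_def cliff_list_def sum8, algebra)
lemma B_3_4: "form_act 3 (\<lambda>I. hodge 3 (omega3 \<Psi>) ((3)#I)) \<Psi> (4) = 4 * sp_inner \<Psi> \<Psi> * cliff (3) \<Psi> (4)"
  by (simp add: form_act_def sum_incr incl3 omega3_def sp_inner_def cliff_list_def sum8, algebra)
lemma C_3_4: "form_act 5 (wedge1 (\<lambda>j. if j = (3) then 1 else 0) (hodge 3 (omega3 \<Psi>))) \<Psi> (4) = -3 * sp_inner \<Psi> \<Psi> * cliff (3) \<Psi> (4)"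
  by (simp add: form_act_def sum_incr incl5 wedge1_def sum5 omega3_def sp_inner_def cliff_list_def sum8, algebra)

lemma A_3_5: "form_act 2 (\<lambda>I. omega3 \<Psi> ((3)#I)) \<Psi> (5) = 3 * sp_inner \<Psi> \<Psi> * cliff (3) \<Psi> (5)"
  by (simp add: form_act_def sum_incr incl2 omega3_def sp_inner_def cliff_list_def sum8, algebra)
lemma B_3_5: "form_act 3 (\<lambda>I. hodge 3 (omega3 \<Psi>) ((3)#I)) \<Psi> (5) = 4 * sp_inner \<Psi> \<Psi> * cliff (3) \<Psi> (5)"
  by (simp add: form_act_def sum_incr incl3 omega3_def sp_inner_def cliff_list_def sum8, algebra)
lemma C_3_5: "form_act 5 (wedge1 (\<lambda>j. if j = (3) then 1 else 0) (hodge 3 (omega3 \<Psi>))) \<Psi> (5) = -3 * sp_inner \<Psi> \<Psi> * cliff (3) \<Psi> (5)"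
  by (simp add: form_act_def sum_incr incl5 wedge1_def sum5 omega3_def sp_inner_def cliff_list_def sum8, algebra)

lemma A_3_6: "form_act 2 (\<lambda>I. omega3 \<Psi> ((3)#I)) \<Psi> (6) = 3 * sp_inner \<Psi> \<Psi> * cliff (3) \<Psi> (6)"
  by (simp add: form_act_def sum_incr incl2 omega3_def sp_inner_def cliff_list_def sum8, algebra)
lemma B_3_6: "form_act 3 (\<lambda>I. hodge 3 (omega3 \<Psi>) ((3)#I)) \<Psi> (6) = 4 * sp_inner \<Psi> \<Psi> * cliff (3) \<Psi> (6)"
  by (simp add: form_act_def sum_incr incl3 omega3_def sp_inner_def cliff_list_def sum8, algebra)
lemma C_3_6: "form_act 5 (wedge1 (\<lambda>j. if j = (3) then 1 else 0) (hodge 3 (omega3 \<Psi>))) \<Psi> (6) = -3 * sp_inner \<Psi> \<Psi> * cliff (3) \<Psi> (6)"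
  by (simp add: form_act_def sum_incr incl5 wedge1_def sum5 omega3_def sp_inner_def cliff_list_def sum8, algebra)

lemma A_3_7: "form_act 2 (\<lambda>I. omega3 \<Psi> ((3)#I)) \<Psi> (7) = 3 * sp_inner \<Psi> \<Psi> * cliff (3) \<Psi> (7)"
  by (simp add: form_act_def sum_incr incl2 omega3_def sp_inner_def cliff_list_def sum8, algebra)
lemma B_3_7: "form_act 3 (\<lambda>I. hodge 3 (omega3 \<Psi>) ((3)#I)) \<Psi> (7) = 4 * sp_inner \<Psi> \<Psi> * cliff (3) \<Psi> (7)"
  by (simp add: form_act_def sum_incr incl3 omega3_def sp_inner_def cliff_list_def sum8, algebra)
lemma C_3_7: "form_act 5 (wedge1 (\<lambda>j. if j = (3) then 1 else 0) (hodge 3 (omega3 \<Psi>))) \<Psi> (7) = -3 * sp_inner \<Psi> \<Psi> * cliff (3) \<Psi> (7)"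
  by (simp add: form_act_def sum_incr incl5 wedge1_def sum5 omega3_def sp_inner_def cliff_list_def sum8, algebra)

lemma A_4_0: "form_act 2 (\<lambda>I. omega3 \<Psi> ((4)#I)) \<Psi> (0) = 3 * sp_inner \<Psi> \<Psi> * cliff (4) \<Psi> (0)"
  by (simp add: form_act_def sum_incr incl2 omega3_def sp_inner_def cliff_list_def sum8, algebra)
lemma B_4_0: "form_act 3 (\<lambda>I. hodge 3 (omega3 \<Psi>) ((4)#I)) \<Psi> (0) = 4 * sp_inner \<Psi> \<Psi> * cliff (4) \<Psi> (0)"
  by (simp add: form_act_def sum_incr incl3 omega3_def sp_inner_def cliff_list_def sum8, algebra)
lemma C_4_0: "form_act 5 (wedge1 (\<lambda>j. if j = (4) then 1 else 0) (hodge 3 (omega3 \<Psi>))) \<Psi> (0) = -3 * sp_inner \<Psi> \<Psi> * cliff (4) \<Psi> (0)"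
  by (simp add: form_act_def sum_incr incl5 wedge1_def sum5 omega3_def sp_inner_def cliff_list_def sum8, algebra)

lemma A_4_1: "form_act 2 (\<lambda>I. omega3 \<Psi> ((4)#I)) \<Psi> (Suc 0) = 3 * sp_inner \<Psi> \<Psi> * cliff (4) \<Psi> (Suc 0)"
  by (simp add: form_act_def sum_incr incl2 omega3_def sp_inner_def cliff_list_def sum8, algebra)
lemma B_4_1: "form_act 3 (\<lambda>I. hodge 3 (omega3 \<Psi>) ((4)#I)) \<Psi> (Suc 0) = 4 * sp_inner \<Psi> \<Psi> * cliff (4) \<Psi> (Suc 0)"
  by (simp add: form_act_def sum_incr incl3 omega3_def sp_inner_def cliff_list_def sum8, algebra)
lemma C_4_1: "form_act 5 (wedge1 (\<lambda>j. if j = (4) then 1 else 0) (hodge 3 (omega3 \<Psi>))) \<Psi> (Suc 0) = -3 * sp_inner \<Psi> \<Psi> * cliff (4) \<Psi> (Suc 0)"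
  by (simp add: form_act_def sum_incr incl5 wedge1_def sum5 omega3_def sp_inner_def cliff_list_def sum8, algebra)

lemma A_4_2: "form_act 2 (\<lambda>I. omega3 \<Psi> ((4)#I)) \<Psi> (2) = 3 * sp_inner \<Psi> \<Psi> * cliff (4) \<Psi> (2)"
  by (simp add: form_act_def sum_incr incl2 omega3_def sp_inner_def cliff_list_def sum8, algebra)
lemma B_4_2: "form_act 3 (\<lambda>I. hodge 3 (omega3 \<Psi>) ((4)#I)) \<Psi> (2) = 4 * sp_inner \<Psi> \<Psi> * cliff (4) \<Psi> (2)"
  by (simp add: form_act_def sum_incr incl3 omega3_def sp_inner_def cliff_list_def sum8, algebra)
lemma C_4_2: "form_act 5 (wedge1 (\<lambda>j. if j = (4) then 1 else 0) (hodge 3 (omega3 \<Psi>))) \<Psi> (2) = -3 * sp_inner \<Psi> \<Psi> * cliff (4) \<Psi> (2)"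
  by (simp add: form_act_def sum_incr incl5 wedge1_def sum5 omega3_def sp_inner_def cliff_list_def sum8, algebra)

lemma A_4_3: "form_act 2 (\<lambda>I. omega3 \<Psi> ((4)#I)) \<Psi> (3) = 3 * sp_inner \<Psi> \<Psi> * cliff (4) \<Psi> (3)"
  by (simp add: form_act_def sum_incr incl2 omega3_def sp_inner_def cliff_list_def sum8, algebra)
lemma B_4_3: "form_act 3 (\<lambda>I. hodge 3 (omega3 \<Psi>) ((4)#I)) \<Psi> (3) = 4 * sp_inner \<Psi> \<Psi> * cliff (4) \<Psi> (3)"
  by (simp add: form_act_def sum_incr incl3 omega3_def sp_inner_def cliff_list_def sum8, algebra)
lemma C_4_3: "form_act 5 (wedge1 (\<lambda>j. if j = (4) then 1 else 0) (hodge 3 (omega3 \<Psi>))) \<Psi> (3) = -3 * sp_inner \<Psi> \<Psi> * cliff (4) \<Psi> (3)"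
  by (simp add: form_act_def sum_incr incl5 wedge1_def sum5 omega3_def sp_inner_def cliff_list_def sum8, algebra)

lemma A_4_4: "form_act 2 (\<lambda>I. omega3 \<Psi> ((4)#I)) \<Psi> (4) = 3 * sp_inner \<Psi> \<Psi> * cliff (4) \<Psi> (4)"
  by (simp add: form_act_def sum_incr incl2 omega3_def sp_inner_def cliff_list_def sum8, algebra)
lemma B_4_4: "form_act 3 (\<lambda>I. hodge 3 (omega3 \<Psi>) ((4)#I)) \<Psi> (4) = 4 * sp_inner \<Psi> \<Psi> * cliff (4) \<Psi> (4)"
  by (simp add: form_act_def sum_incr incl3 omega3_def sp_inner_def cliff_list_def sum8, algebra)
lemma C_4_4: "form_act 5 (wedge1 (\<lambda>j. if j = (4) then 1 else 0) (hodge 3 (omega3 \<Psi>))) \<Psi> (4) = -3 * sp_inner \<Psi> \<Psi> * cliff (4) \<Psi> (4)"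
  by (simp add: form_act_def sum_incr incl5 wedge1_def sum5 omega3_def sp_inner_def cliff_list_def sum8, algebra)

lemma A_4_5: "form_act 2 (\<lambda>I. omega3 \<Psi> ((4)#I)) \<Psi> (5) = 3 * sp_inner \<Psi> \<Psi> * cliff (4) \<Psi> (5)"
  by (simp add: form_act_def sum_incr incl2 omega3_def sp_inner_def cliff_list_def sum8, algebra)
lemma B_4_5: "form_act 3 (\<lambda>I. hodge 3 (omega3 \<Psi>) ((4)#I)) \<Psi> (5) = 4 * sp_inner \<Psi> \<Psi> * cliff (4) \<Psi> (5)"
  by (simp add: form_act_def sum_incr incl3 omega3_def sp_inner_def cliff_list_def sum8, algebra)
lemma C_4_5: "form_act 5 (wedge1 (\<lambda>j. if j = (4) then 1 else 0) (hodge 3 (omega3 \<Psi>))) \<Psi> (5) = -3 * sp_inner \<Psi> \<Psi> * cliff (4) \<Psi> (5)"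
  by (simp add: form_act_def sum_incr incl5 wedge1_def sum5 omega3_def sp_inner_def cliff_list_def sum8, algebra)

lemma A_4_6: "form_act 2 (\<lambda>I. omega3 \<Psi> ((4)#I)) \<Psi> (6) = 3 * sp_inner \<Psi> \<Psi> * cliff (4) \<Psi> (6)"
  by (simp add: form_act_def sum_incr incl2 omega3_def sp_inner_def cliff_list_def sum8, algebra)
lemma B_4_6: "form_act 3 (\<lambda>I. hodge 3 (omega3 \<Psi>) ((4)#I)) \<Psi> (6) = 4 * sp_inner \<Psi> \<Psi> * cliff (4) \<Psi> (6)"
  by (simp add: form_act_def sum_incr incl3 omega3_def sp_inner_def cliff_list_def sum8, algebra)
lemma C_4_6: "form_act 5 (wedge1 (\<lambda>j. if j = (4) then 1 else 0) (hodge 3 (omega3 \<Psi>))) \<Psi> (6) = -3 * sp_inner \<Psi> \<Psi> * cliff (4) \<Psi> (6)"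
  by (simp add: form_act_def sum_incr incl5 wedge1_def sum5 omega3_def sp_inner_def cliff_list_def sum8, algebra)

lemma A_4_7: "form_act 2 (\<lambda>I. omega3 \<Psi> ((4)#I)) \<Psi> (7) = 3 * sp_inner \<Psi> \<Psi> * cliff (4) \<Psi> (7)"
  by (simp add: form_act_def sum_incr incl2 omega3_def sp_inner_def cliff_list_def sum8, algebra)
lemma B_4_7: "form_act 3 (\<lambda>I. hodge 3 (omega3 \<Psi>) ((4)#I)) \<Psi> (7) = 4 * sp_inner \<Psi> \<Psi> * cliff (4) \<Psi> (7)"
  by (simp add: form_act_def sum_incr incl3 omega3_def sp_inner_def cliff_list_def sum8, algebra)
lemma C_4_7: "form_act 5 (wedge1 (\<lambda>j. if j = (4) then 1 else 0) (hodge 3 (omega3 \<Psi>))) \<Psi> (7) = -3 * sp_inner \<Psi> \<Psi> * cliff (4) \<Psi> (7)"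
  by (simp add: form_act_def sum_incr incl5 wedge1_def sum5 omega3_def sp_inner_def cliff_list_def sum8, algebra)

lemma A_5_0: "form_act 2 (\<lambda>I. omega3 \<Psi> ((5)#I)) \<Psi> (0) = 3 * sp_inner \<Psi> \<Psi> * cliff (5) \<Psi> (0)"
  by (simp add: form_act_def sum_incr incl2 omega3_def sp_inner_def cliff_list_def sum8, algebra)
lemma B_5_0: "form_act 3 (\<lambda>I. hodge 3 (omega3 \<Psi>) ((5)#I)) \<Psi> (0) = 4 * sp_inner \<Psi> \<Psi> * cliff (5) \<Psi> (0)"
  by (simp add: form_act_def sum_incr incl3 omega3_def sp_inner_def cliff_list_def sum8, algebra)
lemma C_5_0: "form_act 5 (wedge1 (\<lambda>j. if j = (5) then 1 else 0) (hodge 3 (omega3 \<Psi>))) \<Psi> (0) = -3 * sp_inner \<Psi> \<Psi> * cliff (5) \<Psi> (0)"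
  by (simp add: form_act_def sum_incr incl5 wedge1_def sum5 omega3_def sp_inner_def cliff_list_def sum8, algebra)

lemma A_5_1: "form_act 2 (\<lambda>I. omega3 \<Psi> ((5)#I)) \<Psi> (Suc 0) = 3 * sp_inner \<Psi> \<Psi> * cliff (5) \<Psi> (Suc 0)"
  by (simp add: form_act_def sum_incr incl2 omega3_def sp_inner_def cliff_list_def sum8, algebra)
lemma B_5_1: "form_act 3 (\<lambda>I. hodge 3 (omega3 \<Psi>) ((5)#I)) \<Psi> (Suc 0) = 4 * sp_inner \<Psi> \<Psi> * cliff (5) \<Psi> (Suc 0)"
  by (simp add: form_act_def sum_incr incl3 omega3_def sp_inner_def cliff_list_def sum8, algebra)
lemma C_5_1: "form_act 5 (wedge1 (\<lambda>j. if j = (5) then 1 else 0) (hodge 3 (omega3 \<Psi>))) \<Psi> (Suc 0) = -3 * sp_inner \<Psi> \<Psi> * cliff (5) \<Psi> (Suc 0)"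
  by (simp add: form_act_def sum_incr incl5 wedge1_def sum5 omega3_def sp_inner_def cliff_list_def sum8, algebra)

lemma A_5_2: "form_act 2 (\<lambda>I. omega3 \<Psi> ((5)#I)) \<Psi> (2) = 3 * sp_inner \<Psi> \<Psi> * cliff (5) \<Psi> (2)"
  by (simp add: form_act_def sum_incr incl2 omega3_def sp_inner_def cliff_list_def sum8, algebra)
lemma B_5_2: "form_act 3 (\<lambda>I. hodge 3 (omega3 \<Psi>) ((5)#I)) \<Psi> (2) = 4 * sp_inner \<Psi> \<Psi> * cliff (5) \<Psi> (2)"
  by (simp add: form_act_def sum_incr incl3 omega3_def sp_inner_def cliff_list_def sum8, algebra)
lemma C_5_2: "form_act 5 (wedge1 (\<lambda>j. if j = (5) then 1 else 0) (hodge 3 (omega3 \<Psi>))) \<Psi> (2) = -3 * sp_inner \<Psi> \<Psi> * cliff (5) \<Psi> (2)"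
  by (simp add: form_act_def sum_incr incl5 wedge1_def sum5 omega3_def sp_inner_def cliff_list_def sum8, algebra)

lemma A_5_3: "form_act 2 (\<lambda>I. omega3 \<Psi> ((5)#I)) \<Psi> (3) = 3 * sp_inner \<Psi> \<Psi> * cliff (5) \<Psi> (3)"
  by (simp add: form_act_def sum_incr incl2 omega3_def sp_inner_def cliff_list_def sum8, algebra)
lemma B_5_3: "form_act 3 (\<lambda>I. hodge 3 (omega3 \<Psi>) ((5)#I)) \<Psi> (3) = 4 * sp_inner \<Psi> \<Psi> * cliff (5) \<Psi> (3)"
  by (simp add: form_act_def sum_incr incl3 omega3_def sp_inner_def cliff_list_def sum8, algebra)
lemma C_5_3: "form_act 5 (wedge1 (\<lambda>j. if j = (5) then 1 else 0) (hodge 3 (omega3 \<Psi>))) \<Psi> (3) = -3 * sp_inner \<Psi> \<Psi> * cliff (5) \<Psi> (3)"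
  by (simp add: form_act_def sum_incr incl5 wedge1_def sum5 omega3_def sp_inner_def cliff_list_def sum8, algebra)

lemma A_5_4: "form_act 2 (\<lambda>I. omega3 \<Psi> ((5)#I)) \<Psi> (4) = 3 * sp_inner \<Psi> \<Psi> * cliff (5) \<Psi> (4)"
  by (simp add: form_act_def sum_incr incl2 omega3_def sp_inner_def cliff_list_def sum8, algebra)
lemma B_5_4: "form_act 3 (\<lambda>I. hodge 3 (omega3 \<Psi>) ((5)#I)) \<Psi> (4) = 4 * sp_inner \<Psi> \<Psi> * cliff (5) \<Psi> (4)"
  by (simp add: form_act_def sum_incr incl3 omega3_def sp_inner_def cliff_list_def sum8, algebra)
lemma C_5_4: "form_act 5 (wedge1 (\<lambda>j. if j = (5) then 1 else 0) (hodge 3 (omega3 \<Psi>))) \<Psi> (4) = -3 * sp_inner \<Psi> \<Psi> * cliff (5) \<Psi> (4)"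
  by (simp add: form_act_def sum_incr incl5 wedge1_def sum5 omega3_def sp_inner_def cliff_list_def sum8, algebra)

lemma A_5_5: "form_act 2 (\<lambda>I. omega3 \<Psi> ((5)#I)) \<Psi> (5) = 3 * sp_inner \<Psi> \<Psi> * cliff (5) \<Psi> (5)"
  by (simp add: form_act_def sum_incr incl2 omega3_def sp_inner_def cliff_list_def sum8, algebra)
lemma B_5_5: "form_act 3 (\<lambda>I. hodge 3 (omega3 \<Psi>) ((5)#I)) \<Psi> (5) = 4 * sp_inner \<Psi> \<Psi> * cliff (5) \<Psi> (5)"
  by (simp add: form_act_def sum_incr incl3 omega3_def sp_inner_def cliff_list_def sum8, algebra)
lemma C_5_5: "form_act 5 (wedge1 (\<lambda>j. if j = (5) then 1 else 0) (hodge 3 (omega3 \<Psi>))) \<Psi> (5) = -3 * sp_inner \<Psi> \<Psi> * cliff (5) \<Psi> (5)"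
  by (simp add: form_act_def sum_incr incl5 wedge1_def sum5 omega3_def sp_inner_def cliff_list_def sum8, algebra)

lemma A_5_6: "form_act 2 (\<lambda>I. omega3 \<Psi> ((5)#I)) \<Psi> (6) = 3 * sp_inner \<Psi> \<Psi> * cliff (5) \<Psi> (6)"
  by (simp add: form_act_def sum_incr incl2 omega3_def sp_inner_def cliff_list_def sum8, algebra)
lemma B_5_6: "form_act 3 (\<lambda>I. hodge 3 (omega3 \<Psi>) ((5)#I)) \<Psi> (6) = 4 * sp_inner \<Psi> \<Psi> * cliff (5) \<Psi> (6)"
  by (simp add: form_act_def sum_incr incl3 omega3_def sp_inner_def cliff_list_def sum8, algebra)
lemma C_5_6: "form_act 5 (wedge1 (\<lambda>j. if j = (5) then 1 else 0) (hodge 3 (omega3 \<Psi>))) \<Psi> (6) = -3 * sp_inner \<Psi> \<Psi> * cliff (5) \<Psi> (6)"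
  by (simp add: form_act_def sum_incr incl5 wedge1_def sum5 omega3_def sp_inner_def cliff_list_def sum8, algebra)

lemma A_5_7: "form_act 2 (\<lambda>I. omega3 \<Psi> ((5)#I)) \<Psi> (7) = 3 * sp_inner \<Psi> \<Psi> * cliff (5) \<Psi> (7)"
  by (simp add: form_act_def sum_incr incl2 omega3_def sp_inner_def cliff_list_def sum8, algebra)
lemma B_5_7: "form_act 3 (\<lambda>I. hodge 3 (omega3 \<Psi>) ((5)#I)) \<Psi> (7) = 4 * sp_inner \<Psi> \<Psi> * cliff (5) \<Psi> (7)"
  by (simp add: form_act_def sum_incr incl3 omega3_def sp_inner_def cliff_list_def sum8, algebra)
lemma C_5_7: "form_act 5 (wedge1 (\<lambda>j. if j = (5) then 1 else 0) (hodge 3 (omega3 \<Psi>))) \<Psi> (7) = -3 * sp_inner \<Psi> \<Psi> * cliff (5) \<Psi> (7)"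
  by (simp add: form_act_def sum_incr incl5 wedge1_def sum5 omega3_def sp_inner_def cliff_list_def sum8, algebra)

lemma A_6_0: "form_act 2 (\<lambda>I. omega3 \<Psi> ((6)#I)) \<Psi> (0) = 3 * sp_inner \<Psi> \<Psi> * cliff (6) \<Psi> (0)"
  by (simp add: form_act_def sum_incr incl2 omega3_def sp_inner_def cliff_list_def sum8, algebra)
lemma B_6_0: "form_act 3 (\<lambda>I. hodge 3 (omega3 \<Psi>) ((6)#I)) \<Psi> (0) = 4 * sp_inner \<Psi> \<Psi> * cliff (6) \<Psi> (0)"
  by (simp add: form_act_def sum_incr incl3 omega3_def sp_inner_def cliff_list_def sum8, algebra)
lemma C_6_0: "form_act 5 (wedge1 (\<lambda>j. if j = (6) then 1 else 0) (hodge 3 (omega3 \<Psi>))) \<Psi> (0) = -3 * sp_inner \<Psi> \<Psi> * cliff (6) \<Psi> (0)"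
  by (simp add: form_act_def sum_incr incl5 wedge1_def sum5 omega3_def sp_inner_def cliff_list_def sum8, algebra)

lemma A_6_1: "form_act 2 (\<lambda>I. omega3 \<Psi> ((6)#I)) \<Psi> (Suc 0) = 3 * sp_inner \<Psi> \<Psi> * cliff (6) \<Psi> (Suc 0)"
  by (simp add: form_act_def sum_incr incl2 omega3_def sp_inner_def cliff_list_def sum8, algebra)
lemma B_6_1: "form_act 3 (\<lambda>I. hodge 3 (omega3 \<Psi>) ((6)#I)) \<Psi> (Suc 0) = 4 * sp_inner \<Psi> \<Psi> * cliff (6) \<Psi> (Suc 0)"
  by (simp add: form_act_def sum_incr incl3 omega3_def sp_inner_def cliff_list_def sum8, algebra)
lemma C_6_1: "form_act 5 (wedge1 (\<lambda>j. if j = (6) then 1 else 0) (hodge 3 (omega3 \<Psi>))) \<Psi> (Suc 0) = -3 * sp_inner \<Psi> \<Psi> * cliff (6) \<Psi> (Suc 0)"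
  by (simp add: form_act_def sum_incr incl5 wedge1_def sum5 omega3_def sp_inner_def cliff_list_def sum8, algebra)

lemma A_6_2: "form_act 2 (\<lambda>I. omega3 \<Psi> ((6)#I)) \<Psi> (2) = 3 * sp_inner \<Psi> \<Psi> * cliff (6) \<Psi> (2)"
  by (simp add: form_act_def sum_incr incl2 omega3_def sp_inner_def cliff_list_def sum8, algebra)
lemma B_6_2: "form_act 3 (\<lambda>I. hodge 3 (omega3 \<Psi>) ((6)#I)) \<Psi> (2) = 4 * sp_inner \<Psi> \<Psi> * cliff (6) \<Psi> (2)"
  by (simp add: form_act_def sum_incr incl3 omega3_def sp_inner_def cliff_list_def sum8, algebra)
lemma C_6_2: "form_act 5 (wedge1 (\<lambda>j. if j = (6) then 1 else 0) (hodge 3 (omega3 \<Psi>))) \<Psi> (2) = -3 * sp_inner \<Psi> \<Psi> * cliff (6) \<Psi> (2)"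
  by (simp add: form_act_def sum_incr incl5 wedge1_def sum5 omega3_def sp_inner_def cliff_list_def sum8, algebra)

lemma A_6_3: "form_act 2 (\<lambda>I. omega3 \<Psi> ((6)#I)) \<Psi> (3) = 3 * sp_inner \<Psi> \<Psi> * cliff (6) \<Psi> (3)"
  by (simp add: form_act_def sum_incr incl2 omega3_def sp_inner_def cliff_list_def sum8, algebra)
lemma B_6_3: "form_act 3 (\<lambda>I. hodge 3 (omega3 \<Psi>) ((6)#I)) \<Psi> (3) = 4 * sp_inner \<Psi> \<Psi> * cliff (6) \<Psi> (3)"
  by (simp add: form_act_def sum_incr incl3 omega3_def sp_inner_def cliff_list_def sum8, algebra)
lemma C_6_3: "form_act 5 (wedge1 (\<lambda>j. if j = (6) then 1 else 0) (hodge 3 (omega3 \<Psi>))) \<Psi> (3) = -3 * sp_inner \<Psi> \<Psi> * cliff (6) \<Psi> (3)"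
  by (simp add: form_act_def sum_incr incl5 wedge1_def sum5 omega3_def sp_inner_def cliff_list_def sum8, algebra)

lemma A_6_4: "form_act 2 (\<lambda>I. omega3 \<Psi> ((6)#I)) \<Psi> (4) = 3 * sp_inner \<Psi> \<Psi> * cliff (6) \<Psi> (4)"
  by (simp add: form_act_def sum_incr incl2 omega3_def sp_inner_def cliff_list_def sum8, algebra)
lemma B_6_4: "form_act 3 (\<lambda>I. hodge 3 (omega3 \<Psi>) ((6)#I)) \<Psi> (4) = 4 * sp_inner \<Psi> \<Psi> * cliff (6) \<Psi> (4)"
  by (simp add: form_act_def sum_incr incl3 omega3_def sp_inner_def cliff_list_def sum8, algebra)
lemma C_6_4: "form_act 5 (wedge1 (\<lambda>j. if j = (6) then 1 else 0) (hodge 3 (omega3 \<Psi>))) \<Psi> (4) = -3 * sp_inner \<Psi> \<Psi> * cliff (6) \<Psi> (4)"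
  by (simp add: form_act_def sum_incr incl5 wedge1_def sum5 omega3_def sp_inner_def cliff_list_def sum8, algebra)

lemma A_6_5: "form_act 2 (\<lambda>I. omega3 \<Psi> ((6)#I)) \<Psi> (5) = 3 * sp_inner \<Psi> \<Psi> * cliff (6) \<Psi> (5)"
  by (simp add: form_act_def sum_incr incl2 omega3_def sp_inner_def cliff_list_def sum8, algebra)
lemma B_6_5: "form_act 3 (\<lambda>I. hodge 3 (omega3 \<Psi>) ((6)#I)) \<Psi> (5) = 4 * sp_inner \<Psi> \<Psi> * cliff (6) \<Psi> (5)"
  by (simp add: form_act_def sum_incr incl3 omega3_def sp_inner_def cliff_list_def sum8, algebra)
lemma C_6_5: "form_act 5 (wedge1 (\<lambda>j. if j = (6) then 1 else 0) (hodge 3 (omega3 \<Psi>))) \<Psi> (5) = -3 * sp_inner \<Psi> \<Psi> * cliff (6) \<Psi> (5)"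
  by (simp add: form_act_def sum_incr incl5 wedge1_def sum5 omega3_def sp_inner_def cliff_list_def sum8, algebra)

lemma A_6_6: "form_act 2 (\<lambda>I. omega3 \<Psi> ((6)#I)) \<Psi> (6) = 3 * sp_inner \<Psi> \<Psi> * cliff (6) \<Psi> (6)"
  by (simp add: form_act_def sum_incr incl2 omega3_def sp_inner_def cliff_list_def sum8, algebra)
lemma B_6_6: "form_act 3 (\<lambda>I. hodge 3 (omega3 \<Psi>) ((6)#I)) \<Psi> (6) = 4 * sp_inner \<Psi> \<Psi> * cliff (6) \<Psi> (6)"
  by (simp add: form_act_def sum_incr incl3 omega3_def sp_inner_def cliff_list_def sum8, algebra)
lemma C_6_6: "form_act 5 (wedge1 (\<lambda>j. if j = (6) then 1 else 0) (hodge 3 (omega3 \<Psi>))) \<Psi> (6) = -3 * sp_inner \<Psi> \<Psi> * cliff (6) \<Psi> (6)"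
  by (simp add: form_act_def sum_incr incl5 wedge1_def sum5 omega3_def sp_inner_def cliff_list_def sum8, algebra)

lemma A_6_7: "form_act 2 (\<lambda>I. omega3 \<Psi> ((6)#I)) \<Psi> (7) = 3 * sp_inner \<Psi> \<Psi> * cliff (6) \<Psi> (7)"
  by (simp add: form_act_def sum_incr incl2 omega3_def sp_inner_def cliff_list_def sum8, algebra)
lemma B_6_7: "form_act 3 (\<lambda>I. hodge 3 (omega3 \<Psi>) ((6)#I)) \<Psi> (7) = 4 * sp_inner \<Psi> \<Psi> * cliff (6) \<Psi> (7)"
  by (simp add: form_act_def sum_incr incl3 omega3_def sp_inner_def cliff_list_def sum8, algebra)
lemma C_6_7: "form_act 5 (wedge1 (\<lambda>j. if j = (6) then 1 else 0) (hodge 3 (omega3 \<Psi>))) \<Psi> (7) = -3 * sp_inner \<Psi> \<Psi> * cliff (6) \<Psi> (7)"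
  by (simp add: form_act_def sum_incr incl5 wedge1_def sum5 omega3_def sp_inner_def cliff_list_def sum8, algebra)


lemmas A_tab = A_0_0 A_0_1 A_0_2 A_0_3 A_0_4 A_0_5 A_0_6 A_0_7 A_1_0 A_1_1 A_1_2 A_1_3 A_1_4 A_1_5 A_1_6 A_1_7 A_2_0 A_2_1 A_2_2 A_2_3 A_2_4 A_2_5 A_2_6 A_2_7 A_3_0 A_3_1 A_3_2 A_3_3 A_3_4 A_3_5 A_3_6 A_3_7 A_4_0 A_4_1 A_4_2 A_4_3 A_4_4 A_4_5 A_4_6 A_4_7 A_5_0 A_5_1 A_5_2 A_5_3 A_5_4 A_5_5 A_5_6 A_5_7 A_6_0 A_6_1 A_6_2 A_6_3 A_6_4 A_6_5 A_6_6 A_6_7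
lemmas B_tab = B_0_0 B_0_1 B_0_2 B_0_3 B_0_4 B_0_5 B_0_6 B_0_7 B_1_0 B_1_1 B_1_2 B_1_3 B_1_4 B_1_5 B_1_6 B_1_7 B_2_0 B_2_1 B_2_2 B_2_3 B_2_4 B_2_5 B_2_6 B_2_7 B_3_0 B_3_1 B_3_2 B_3_3 B_3_4 B_3_5 B_3_6 B_3_7 B_4_0 B_4_1 B_4_2 B_4_3 B_4_4 B_4_5 B_4_6 B_4_7 B_5_0 B_5_1 B_5_2 B_5_3 B_5_4 B_5_5 B_5_6 B_5_7 B_6_0 B_6_1 B_6_2 B_6_3 B_6_4 B_6_5 B_6_6 B_6_7
lemmas C_tab = C_0_0 C_0_1 C_0_2 C_0_3 C_0_4 C_0_5 C_0_6 C_0_7 C_1_0 C_1_1 C_1_2 C_1_3 C_1_4 C_1_5 C_1_6 C_1_7 C_2_0 C_2_1 C_2_2 C_2_3 C_2_4 C_2_5 C_2_6 C_2_7 C_3_0 C_3_1 C_3_2 C_3_3 C_3_4 C_3_5 C_3_6 C_3_7 C_4_0 C_4_1 C_4_2 C_4_3 C_4_4 C_4_5 C_4_6 C_4_7 C_5_0 C_5_1 C_5_2 C_5_3 C_5_4 C_5_5 C_5_6 C_5_7 C_6_0 C_6_1 C_6_2 C_6_3 C_6_4 C_6_5 C_6_6 C_6_7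

lemma sum7: "(\<Sum>k<(7::nat). g k) = g 0 + g (Suc 0) + g 2 + g 3 + g 4 + g 5 + (g 6 :: real)"
  by (simp add: numeral_eq_Suc lessThan_Suc)
lemma lt7: "(i::nat) < 7 \<Longrightarrow> i = 0 \<or> i = Suc 0 \<or> i = 2 \<or> i = 3 \<or> i = 4 \<or> i = 5 \<or> i = 6" by arith
lemma lt8: "(i::nat) < 8 \<Longrightarrow> i = 0 \<or> i = Suc 0 \<or> i = 2 \<or> i = 3 \<or> i = 4 \<or> i = 5 \<or> i = 6 \<or> i = 7" by arith

lemma A_gen: "i < 7 \<Longrightarrow> m < 8 \<Longrightarrow> form_act 2 (\<lambda>I. omega3 \<Psi> (i#I)) \<Psi> m = 3 * sp_inner \<Psi> \<Psi> * cliff i \<Psi> m"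
  by (drule lt7, drule lt8, elim disjE) (simp_all only: A_tab)
lemma B_gen: "i < 7 \<Longrightarrow> m < 8 \<Longrightarrow> form_act 3 (\<lambda>I. hodge 3 (omega3 \<Psi>) (i#I)) \<Psi> m = 4 * sp_inner \<Psi> \<Psi> * cliff i \<Psi> m"
  by (drule lt7, drule lt8, elim disjE) (simp_all only: B_tab)
lemma C_gen: "i < 7 \<Longrightarrow> m < 8 \<Longrightarrow> form_act 5 (wedge1 (\<lambda>j. if j = i then 1 else 0) (hodge 3 (omega3 \<Psi>))) \<Psi> m = -3 * sp_inner \<Psi> \<Psi> * cliff i \<Psi> m"
  by (drule lt7, drule lt8, elim disjE) (simp_all only: C_tab)

lemma form_act_lin: "form_act k (\<lambda>I. \<Sum>i<7. X i * G i I) \<psi> m = (\<Sum>i<7. X i * form_act k (G i) \<psi> m)"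
proof -
  have "form_act k (\<lambda>I. \<Sum>i<7. X i * G i I) \<psi> m = (\<Sum>I\<in>incr_lists k. \<Sum>i<7. X i * (G i I * cliff_list I \<psi> m))"
    unfolding form_act_def by (simp add: sum_distrib_right mult.assoc)
  also have "\<dots> = (\<Sum>i<7. \<Sum>I\<in>incr_lists k. X i * (G i I * cliff_list I \<psi> m))"
    by (rule sum.swap)
  also have "\<dots> = (\<Sum>i<7. X i * form_act k (G i) \<psi> m)"
    unfolding form_act_def by (simp add: sum_distrib_left)
  finally show ?thesis .
qed

lemma form_act_cong: "(\<And>I. I \<in> incr_lists k \<Longrightarrow> F I = G I) \<Longrightarrow> form_act k F \<psi> m = form_act k G \<psi> m"
  unfolding form_act_def by (rule sum.cong) auto

lemma form_act_scale: "form_act k (\<lambda>I. c * G I) \<psi> m = c * form_act k G \<psi> m"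
  unfolding form_act_def by (simp add: sum_distrib_left mult.assoc)

lemma wedge1_lin: "set I \<subseteq> {..<7} \<Longrightarrow>
   wedge1 X F I = (\<Sum>i<7. X i * wedge1 (\<lambda>j. if j = i then 1 else 0) F I)"
proof -
  assume s: "set I \<subseteq> {..<7}"
  have x: "X (I ! t) = (\<Sum>i<7. X i * (if I ! t = i then 1 else 0))" if "t < length I" for t
  proof -
    have "I ! t < 7" using s that nth_mem by blast
    then show ?thesis by (simp add: if_distrib[of "\<lambda>z. X _ * z"] sum.delta' cong: if_cong)
  qed
  have "wedge1 X F I = (\<Sum>t<length I. \<Sum>i<7. X i * ((-1)^t * (if I ! t = i then 1 else 0) * F (take t I @ drop (Suc t) I)))"
    unfolding wedge1_def
    by (rule sum.cong) (simp_all add: x sum_distrib_left sum_distrib_right mult_ac)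
  also have "\<dots> = (\<Sum>i<7. \<Sum>t<length I. X i * ((-1)^t * (if I ! t = i then 1 else 0) * F (take t I @ drop (Suc t) I)))"
    by (rule sum.swap)
  also have "\<dots> = (\<Sum>i<7. X i * wedge1 (\<lambda>j. if j = i then 1 else 0) F I)"
    unfolding wedge1_def by (simp add: sum_distrib_left)
  finally show ?thesis .
qed

lemma wedge1_scale: "wedge1 X (\<lambda>I. c * G I) I = c * wedge1 X G I"
  unfolding wedge1_def by (simp add: sum_distrib_left mult.assoc mult.left_commute)

lemma vec_act_lin: "vec_act X \<psi> m = (\<Sum>i<7. X i * cliff i \<psi> m)"
  unfolding vec_act_def by simp

lemma key:
  fixes p q a f :: real and \<Psi> :: spinor
  assumes unit: "sp_inner \<Psi> \<Psi> = 1" and m: "m < 8"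
  shows "vec_act X \<Psi> m
         + 1/4 * form_act 2 (interior X (\<lambda>I. a * omega3 \<Psi> I)) \<Psi> m
         + p * form_act 3 (interior X (\<lambda>I. f * hodge 3 (omega3 \<Psi>) I)) \<Psi> m
         + q * form_act 5 (wedge1 X (\<lambda>I. f * hodge 3 (omega3 \<Psi>) I)) \<Psi> m
       = (1 + 3 * a / 4 + 4 * p * f - 3 * q * f) * vec_act X \<Psi> m"
proof -
  have T: "form_act 2 (interior X (\<lambda>I. a * omega3 \<Psi> I)) \<Psi> m = (\<Sum>i<7. X i * (a * 3 * cliff i \<Psi> m))"
  proof -
    have "form_act 2 (interior X (\<lambda>I. a * omega3 \<Psi> I)) \<Psi> m
        = (\<Sum>i<7. X i * form_act 2 (\<lambda>I. a * omega3 \<Psi> (i#I)) \<Psi> m)"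
      unfolding interior_def by (rule form_act_lin)
    also have "\<dots> = (\<Sum>i<7. X i * (a * 3 * cliff i \<Psi> m))"
      by (rule sum.cong) (simp_all add: form_act_scale A_gen m unit)
    finally show ?thesis .
  qed
  have F1: "form_act 3 (interior X (\<lambda>I. f * hodge 3 (omega3 \<Psi>) I)) \<Psi> m = (\<Sum>i<7. X i * (f * 4 * cliff i \<Psi> m))"
  proof -
    have "form_act 3 (interior X (\<lambda>I. f * hodge 3 (omega3 \<Psi>) I)) \<Psi> m
        = (\<Sum>i<7. X i * form_act 3 (\<lambda>I. f * hodge 3 (omega3 \<Psi>) (i#I)) \<Psi> m)"
      unfolding interior_def by (rule form_act_lin)
    also have "\<dots> = (\<Sum>i<7. X i * (f * 4 * cliff i \<Psi> m))"
      by (rule sum.cong) (simp_all add: form_act_scale B_gen m unit)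
    finally show ?thesis .
  qed
  have F2: "form_act 5 (wedge1 X (\<lambda>I. f * hodge 3 (omega3 \<Psi>) I)) \<Psi> m = (\<Sum>i<7. X i * (f * (-3) * cliff i \<Psi> m))"
  proof -
    have "form_act 5 (wedge1 X (\<lambda>I. f * hodge 3 (omega3 \<Psi>) I)) \<Psi> m
        = form_act 5 (\<lambda>I. \<Sum>i<7. X i * (f * wedge1 (\<lambda>j. if j = i then 1 else 0) (hodge 3 (omega3 \<Psi>)) I)) \<Psi> m"
      by (rule form_act_cong) (simp add: wedge1_lin[of _ X] wedge1_scale incr_lists_def sum_distrib_left mult.left_commute)
    also have "\<dots> = (\<Sum>i<7. X i * form_act 5 (\<lambda>I. f * wedge1 (\<lambda>j. if j = i then 1 else 0) (hodge 3 (omega3 \<Psi>)) I) \<Psi> m)"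
      by (rule form_act_lin)
    also have "\<dots> = (\<Sum>i<7. X i * (f * (-3) * cliff i \<Psi> m))"
      by (rule sum.cong) (simp_all add: form_act_scale C_gen m unit)
    finally show ?thesis .
  qed
  show ?thesis unfolding T F1 F2 vec_act_lin
    by (simp add: sum_distrib_left sum_distrib_right sum.distrib[symmetric] algebra_simps)
qed

lemma adm_iff:
  fixes p q a f :: real and \<Psi> :: spinor
  assumes unit: "sp_inner \<Psi> \<Psi> = 1"
  shows "admissible p q \<Psi> (\<lambda>I. a * omega3 \<Psi> I) (\<lambda>I. f * hodge 3 (omega3 \<Psi>) I)
         \<longleftrightarrow> 1 + 3 * a / 4 + 4 * p * f - 3 * q * f = 0"
proof
  assume adm: "admissible p q \<Psi> (\<lambda>I. a * omega3 \<Psi> I) (\<lambda>I. f * hodge 3 (omega3 \<Psi>) I)"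
  define K where "K = 1 + 3 * a / 4 + 4 * p * f - 3 * q * f"
  define X :: vec7 where "X = (\<lambda>j. if j = 0 then 1 else 0)"
  have z: "K * vec_act X \<Psi> m = 0" if "m < 8" for m
    using adm key[OF unit that, of X a p f q] that unfolding admissible_def sp_zero_def K_def
    by metis
  have v: "vec_act X \<Psi> m = cliff 0 \<Psi> m" for m
    unfolding vec_act_def X_def by (simp add: sum7)
  show "K = 0"
  proof (rule ccontr)
    assume "K \<noteq> 0"
    then have c: "cliff 0 \<Psi> m = 0" if "m < 8" for m using z[OF that] v by simp
    have "\<Psi> 0 = 0" "\<Psi> (Suc 0) = 0" "\<Psi> 2 = 0" "\<Psi> 3 = 0" "\<Psi> 4 = 0" "\<Psi> 5 = 0" "\<Psi> 6 = 0" "\<Psi> 7 = 0"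
      using c[of 0] c[of "Suc 0"] c[of 2] c[of 3] c[of 4] c[of 5] c[of 6] c[of 7] by simp_all
    then have "sp_inner \<Psi> \<Psi> = 0" unfolding sp_inner_def by (simp add: sum8)
    then show False using unit by simp
  qed
next
  assume K: "1 + 3 * a / 4 + 4 * p * f - 3 * q * f = 0"
  show "admissible p q \<Psi> (\<lambda>I. a * omega3 \<Psi> I) (\<lambda>I. f * hodge 3 (omega3 \<Psi>) I)"
    unfolding admissible_def sp_zero_def
    using key[OF unit] K by simp
qed

theorem mainTheorem4:
  fixes p q :: real and \<Psi> :: spinor
  assumes unit: "sp_inner \<Psi> \<Psi> = 1"
  shows "(\<forall>a f :: real.
            admissible p q \<Psi> (\<lambda>I. a * omega3 \<Psi> I) (\<lambda>I. f * hodge 3 (omega3 \<Psi>) I)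
            \<longleftrightarrow> a = (12 * q - 16 * p) * f / 3 - 4 / 3)
       \<and> (4 * p - 3 * q = 0 \<longrightarrow>
            (\<forall>a f :: real.
              admissible p q \<Psi> (\<lambda>I. a * omega3 \<Psi> I) (\<lambda>I. f * hodge 3 (omega3 \<Psi>) I)
              \<longleftrightarrow> a = - 4 / 3))"
proof -
  have e: "(1 + 3 * a / 4 + 4 * p * f - 3 * q * f = 0) \<longleftrightarrow> a = (12 * q - 16 * p) * f / 3 - 4 / 3" for a f :: real
    by (auto simp: field_simps)
  have e2: "4 * p - 3 * q = 0 \<Longrightarrow> (12 * q - 16 * p) * f / 3 - 4 / 3 = - 4 / 3" for f :: real
  proof -
    assume "4 * p - 3 * q = 0"
    then have "12 * q - 16 * p = 0" by linarith
    then show ?thesis by simp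
  qed
  have e3: "4 * p - 3 * q = 0 \<Longrightarrow> (1 + 3 * a / 4 + 4 * p * f - 3 * q * f = 0) \<longleftrightarrow> a = - 4 / 3" for a f :: real
    using e e2 by metis
  show ?thesis using adm_iff[OF unit] e e3 by simp
qed

end
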